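(* Let $K(x)$, $x\in(0,\infty)^d$, be the Onsager response matrix described in the context, and let $|g|(x)=\dfrac{d}{\lambda_1(x)\cdots\lambda_{d-1}(x)}$ for $x\in(0,\infty)^d$, where $\lambda_1(x),\dots,\lambda_{d-1}(x)$ are the positive eigenvalues of $K(x)$. Let $f\in C^2((0,\infty)^d)$ and let $F(x^1,\dots,x^{d-1})=f(x^1,\dots,x^{d-1},1-x^1-\dots-x^{d-1})$ on $\Omega_{d-1}=\{x'\in(0,1)^{d-1}:0<\sum_{i=1}^{d-1}x^i<1\}$. For the Riemannian metric $g$ on the relative interior of the simplex $\mathcal S^\circ=\{x\in(0,1)^d:\sum_i x_i=1\}$ whose coordinate components in the coordinates $(x^1,\dots,x^{d-1})$ are $g_{ij}(x)=\langle e_i-e_d,K^\dagger(x)(e_j-e_d)\rangle_{\mathbb R^d}$ (with $K^\dagger$ the Moore–Penrose pseudoinverse), let $(g^{ij})$ be the inverse matrix and define the Laplace–Beltrami operator $\Delta_g f=\frac{1}{\sqrt{|g|}}\sum_{i,j=1}^{d-1}\frac{\partial}{\partial x^i}\big(\sqrt{|g|}\,g^{ij}\frac{\partial F}{\partial x^j}\big)$ and the Dirichlet energy density $g(\operatorname{grad}_g f,\operatorname{grad}_g f)=\sum_{i,j=1}^{d-1}g^{ij}\partial_iF\,\partial_jF$. Then at every point $x\in\mathcal S^\circ$, $$\Delta_g f=\frac{1}{\sqrt{|g|}}\nabla\cdot\big(\sqrt{|g|}\,K\nabla f\big),\qquad g(\operatorname{grad}_g f,\operatorname{grad}_g f)=\langle\nabla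 f,K\nabla f\rangle_{\mathbb R^d},$$ where $\nabla$ and $\nabla\cdot$ are the Euclidean gradient and divergence in $\mathbb R^d$.
   Context: Setting: $Q=(Q_{ij})$ is a real $d\times d$ matrix ($d\ge2$) with $Q_{ij}\ge0$ for $i\ne j$ and zero row sums; the graph with edges $\{(i,j):i\ne j,\,Q_{ij}>0\}$ is connected. $x^s\in(0,\infty)^d$ satisfies $Q^\intercal x^s=0$, $\sum_i x^s_i=1$, and detailed balance $Q_{ij}x^s_i=Q_{ji}x^s_j$. Put $\omega_{ij}=Q_{ij}x^s_i$. Let $\phi:(0,\infty)\to\mathbb R$ be smooth with $\phi''>0$, $\theta(s,t)=\frac{s-t}{\phi'(s)-\phi'(t)}$ for $s\ne t$, $\theta(s,s)=1/\phi''(s)$. For $x\in(0,\infty)^d$: $K_{ij}(x)=-\omega_{ij}\theta(x_i/x^s_i,x_j/x^s_j)$ for $j\ne i$ and $K_{ii}(x)=-\sum_{j\ne i}K_{ij}(x)$. $K(x)$ is symmetric, positive semidefinite, has zero row sums and kernel spanned by $(1,\dots,1)$; in these coordinates $(g^{ij})$ is the upper-left $(d-1)\times(d-1)$ block of $K$ and $\det(g_{ij})=|g|$. *)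

theory Defs
  imports "HOL-Analysis.Analysis" "HOL-Computational_Algebra.Polynomial"
begin

text \<open>Vectors in R^d are real^'n with d = CARD('n). The distinguished index dl plays the
role of the last coordinate e_d; the chart coordinates are the components y$i, i \<noteq> dl.\<close>

definition smooth_pos :: "(real \<Rightarrow> real) \<Rightarrow> bool" where
  "smooth_pos \<phi> \<longleftrightarrow> (\<forall>k. \<forall>t>0. ((deriv ^^ k) \<phi>) differentiable (at t))"

definition theta :: "(real \<Rightarrow> real) \<Rightarrow> real \<Rightarrow> real \<Rightarrow> real" where
  "theta \<phi> s t = (if s = t then 1 / deriv (deriv \<phi>) s
                   else (s - t) / (deriv \<phi> s - deriv \<phi> t))"

definition Kmat :: "real^'n^'n \<Rightarrow> real^'n \<Rightarrow> (real \<Rightarrow> real) \<Rightarrow> real^'n \<Rightarrow> real^'n^'n" where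
  "Kmat Q xs \<phi> x = (\<chi> i j. if i \<noteq> j
       then - ((Q$i$j * xs$i) * theta \<phi> (x$i / xs$i) (x$j / xs$j))
       else (\<Sum>k\<in>UNIV - {i}. (Q$i$k * xs$i) * theta \<phi> (x$i / xs$i) (x$k / xs$k)))"

definition charpoly :: "real^'n^'n \<Rightarrow> real poly" where
  "charpoly A = det (\<chi> i j. (if i = j then [:0, 1:] else 0) - [:A$i$j:])"

definition pos_eig_prod :: "real^'n^'n \<Rightarrow> real" where
  "pos_eig_prod A = (\<Prod>r\<in>{r. r > 0 \<and> poly (charpoly A) r = 0}. r ^ order r (charpoly A))"

definition detg :: "real^'n^'n \<Rightarrow> real" where
  "detg A = real CARD('n) / pos_eig_prod A"

definition pinv :: "real^'n^'n \<Rightarrow> real^'n^'n" where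
  "pinv A = (THE B. A ** B ** A = A \<and> B ** A ** B = B \<and>
                    transpose (A ** B) = A ** B \<and> transpose (B ** A) = B ** A)"

definition glow :: "'n \<Rightarrow> real^'n^'n \<Rightarrow> 'n \<Rightarrow> 'n \<Rightarrow> real" where
  "glow dl A i j = (axis i 1 - axis dl 1) \<bullet> (pinv A *v (axis j 1 - axis dl 1))"

text \<open>Inverse matrix (g^ij), i, j \<noteq> dl: inverse of the (d-1)x(d-1) block, computed as the
  inverse of the block-diagonal matrix diag((g_ij), 1).\<close>
definition gup :: "'n \<Rightarrow> real^'n^'n \<Rightarrow> real^'n^'n" where
  "gup dl A = matrix_inv (\<chi> i j. if i \<noteq> dl \<and> j \<noteq> dl then glow dl A i j
                                  else if i = dl \<and> j = dl then 1 else 0)"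

definition pd :: "(real^'n \<Rightarrow> real) \<Rightarrow> 'n \<Rightarrow> real^'n \<Rightarrow> real" where
  "pd f i x = deriv (\<lambda>t. f (x + t *\<^sub>R axis i 1)) 0"

definition egrad :: "(real^'n \<Rightarrow> real) \<Rightarrow> real^'n \<Rightarrow> real^'n" where
  "egrad f x = (\<chi> i. pd f i x)"

definition C2_on :: "(real^'n) set \<Rightarrow> (real^'n \<Rightarrow> real) \<Rightarrow> bool" where
  "C2_on S f \<longleftrightarrow> f differentiable_on S \<and> (\<forall>i. pd f i differentiable_on S) \<and>
                  (\<forall>i j. continuous_on S (pd (pd f i) j))"

text \<open>Chart: (x^i)_{i \<noteq> dl} \<mapsto> point of the simplex with x^dl = 1 - sum of the others.
  The dl-component of the argument is ignored.\<close>
definition lift :: "'n \<Rightarrow> real^'n \<Rightarrow> real^'n" where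
  "lift dl y = (\<chi> i. if i = dl then 1 - (\<Sum>j\<in>UNIV - {dl}. y$j) else y$i)"

end

theory Submission
  imports Defs "HOL-Computational_Algebra.Fundamental_Theorem_Algebra"
begin


lemma mp_unique:
  fixes A B C :: "real^'n^'n"
  assumes b1: "A ** B ** A = A" and b2: "B ** A ** B = B" and b3: "transpose (A ** B) = A ** B"
    and b4: "transpose (B ** A) = B ** A"
    and c1: "A ** C ** A = A" and c2: "C ** A ** C = C" and c3: "transpose (A ** C) = A ** C"
    and c4: "transpose (C ** A) = C ** A"
  shows "B = C"
proof -
  have ab: "A ** B = A ** C"
  proof -
    have "A ** B = (A ** C ** A) ** B" using c1 by simp
    also have "... = (A ** C) ** (A ** B)" by (simp add: matrix_mul_assoc)
    also have "... = transpose (A ** C) ** transpose (A ** B)" using b3 c3 by simp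
    also have "... = transpose ((A ** B) ** (A ** C))" by (simp add: matrix_transpose_mul)
    also have "... = transpose ((A ** B ** A) ** C)" by (simp add: matrix_mul_assoc)
    also have "... = transpose (A ** C)" using b1 by simp
    finally show ?thesis using c3 by simp
  qed
  have ba: "B ** A = C ** A"
  proof -
    have "B ** A = B ** (A ** C ** A)" using c1 by simp
    also have "... = (B ** A) ** (C ** A)" by (simp add: matrix_mul_assoc)
    also have "... = transpose (B ** A) ** transpose (C ** A)" using b4 c4 by simp
    also have "... = transpose ((C ** A) ** (B ** A))" by (simp add: matrix_transpose_mul)
    also have "... = transpose (C ** (A ** B ** A))" by (simp add: matrix_mul_assoc)
    also have "... = transpose (C ** A)" using b1 by simp
    finally show ?thesis using c4 by simp
  qed
  have "B = B ** A ** B" using b2 by simp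
  also have "... = B ** (A ** C)" using ab by (metis matrix_mul_assoc)
  also have "... = C ** A ** C" using ba by (metis matrix_mul_assoc)
  finally show ?thesis using c2 by simp
qed


lemma mm_add_r: "((A::real^'m^'n) + B) ** (C::real^'k^'m) = A ** C + B ** C"
  by (simp add: matrix_matrix_mult_def vec_eq_iff algebra_simps sum.distrib)
lemma mm_diff_r: "((A::real^'m^'n) - B) ** (C::real^'k^'m) = A ** C - B ** C"
  by (simp add: matrix_matrix_mult_def vec_eq_iff algebra_simps sum_subtractf)
lemma mm_add_l: "(C::real^'m^'n) ** ((A::real^'k^'m) + B) = C ** A + C ** B"
  by (simp add: matrix_matrix_mult_def vec_eq_iff algebra_simps sum.distrib)
lemma mm_diff_l: "(C::real^'m^'n) ** ((A::real^'k^'m) - B) = C ** A - C ** B"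
  by (simp add: matrix_matrix_mult_def vec_eq_iff algebra_simps sum_subtractf)
lemma transpose_diff: "transpose ((A::real^'m^'n) - B) = transpose A - transpose B"
  by (simp add: transpose_def vec_eq_iff)

definition Jm :: "real^'n^'n" where "Jm = (\<chi> i j. 1 / real CARD('n))"

lemma Jm_Jm: "Jm ** Jm = (Jm :: real^'n^'n)"
  by (simp add: Jm_def matrix_matrix_mult_def vec_eq_iff)

lemma transpose_Jm: "transpose (Jm :: real^'n^'n) = Jm"
  by (simp add: Jm_def transpose_def vec_eq_iff)

locale kerone =
  fixes A :: "real^'n^'n"
  assumes sym: "\<And>i j. A$i$j = A$j$i"
    and row0: "\<And>i. (\<Sum>j\<in>UNIV. A$i$j) = 0"
    and ker: "\<And>v. A *v v = 0 \<Longrightarrow> v$i = v$j"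
begin

lemma transpose_A: "transpose A = A"
  using sym by (simp add: transpose_def vec_eq_iff)

lemma A_J: "A ** Jm = 0"
proof -
  have "(\<Sum>j\<in>UNIV. A$i$j * (1 / real CARD('n))) = 0" for i
    using row0[of i] by (simp add: sum_divide_distrib[symmetric])
  then show ?thesis by (simp add: Jm_def matrix_matrix_mult_def vec_eq_iff)
qed

lemma J_A: "Jm ** A = 0"
proof -
  have "(\<Sum>j\<in>UNIV. (1 / real CARD('n)) * A$j$k) = 0" for k
  proof -
    have "(\<Sum>j\<in>UNIV. A$j$k) = 0" using row0[of k] sym by simp
    then show ?thesis by (simp add: sum_divide_distrib[symmetric])
  qed
  then show ?thesis by (simp add: Jm_def matrix_matrix_mult_def vec_eq_iff)
qed

lemma inj_AJ: "inj ((*v) (A + Jm))"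
proof -
  have z: "v = 0" if h: "(A + Jm) *v v = 0" for v
  proof -
    have "Jm *v ((A + Jm) *v v) = Jm *v v"
      by (simp add: matrix_vector_mul_assoc mm_add_l J_A Jm_Jm)
    then have Jv: "Jm *v v = 0" using h by simp
    have "A *v v = (A + Jm) *v v - Jm *v v" by (simp add: matrix_vector_mult_add_rdistrib)
    then have "A *v v = 0" using h Jv by simp
    then have eq: "\<And>i j. v$i = v$j" using ker by blast
    fix i0
    show ?thesis
    proof -
      have "(Jm *v v)$i = v$i" for i
      proof -
        have "(\<Sum>j\<in>UNIV. v$j / real CARD('n)) = (\<Sum>j\<in>(UNIV::'n set). v$i / real CARD('n))"
          by (rule sum.cong) (use eq in auto)
        then show ?thesis by (simp add: Jm_def matrix_vector_mult_def)
      qed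
      then show ?thesis using Jv by (simp add: vec_eq_iff)
    qed
  qed
  show ?thesis
  proof (rule injI)
    fix x y assume "(A + Jm) *v x = (A + Jm) *v y"
    then have "(A + Jm) *v (x - y) = 0" by (simp add: matrix_vector_mult_diff_distrib)
    then show "x = y" using z[of "x - y"] by simp
  qed
qed

definition Minv where "Minv = (SOME M. M ** (A + Jm) = mat 1)"

lemma Minv: "Minv ** (A + Jm) = mat 1" "(A + Jm) ** Minv = mat 1"
proof -
  have "\<exists>M. M ** (A + Jm) = mat 1" using inj_AJ matrix_left_invertible_injective by blast
  then show 1: "Minv ** (A + Jm) = mat 1" unfolding Minv_def by (rule someI_ex)
  then show "(A + Jm) ** Minv = mat 1" using matrix_left_right_inverse by blast
qed

lemma JM: "Jm ** Minv = Jm"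
proof -
  have "Jm = Jm ** ((A + Jm) ** Minv)" using Minv by simp
  also have "... = (Jm ** A + Jm ** Jm) ** Minv" by (simp add: matrix_mul_assoc mm_add_l)
  finally show ?thesis by (simp add: J_A Jm_Jm)
qed

lemma MJ: "Minv ** Jm = Jm"
proof -
  have "Jm = (Minv ** (A + Jm)) ** Jm" using Minv by simp
  also have "... = Minv ** ((A + Jm) ** Jm)" by (metis matrix_mul_assoc)
  also have "... = Minv ** (A ** Jm + Jm ** Jm)" by (simp add: mm_add_r)
  finally show ?thesis by (simp add: A_J Jm_Jm)
qed

lemma AM: "A ** Minv = mat 1 - Jm"
proof -
  have "mat 1 = A ** Minv + Jm ** Minv" using Minv by (simp add: mm_add_r)
  then show ?thesis using JM by simp
qed

lemma MA: "Minv ** A = mat 1 - Jm"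
proof -
  have "mat 1 = Minv ** A + Minv ** Jm" using Minv by (simp add: mm_add_l)
  then show ?thesis using MJ by simp
qed

definition P where "P = Minv - Jm"

lemma AP: "A ** P = mat 1 - Jm"
  by (simp add: P_def mm_diff_l AM A_J)
lemma PA: "P ** A = mat 1 - Jm"
  by (simp add: P_def mm_diff_r MA J_A)
lemma JP: "Jm ** P = 0"
  by (simp add: P_def mm_diff_l JM Jm_Jm)

lemma pinv_eq: "pinv A = P"
proof -
  have p1: "A ** P ** A = A" by (simp add: AP mm_diff_r J_A)
  have p2: "P ** A ** P = P" by (simp add: PA mm_diff_r JP)
  have p3: "transpose (A ** P) = A ** P" by (simp add: AP transpose_diff transpose_Jm)
  have p4: "transpose (P ** A) = P ** A" by (simp add: PA transpose_diff transpose_Jm)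
  show ?thesis unfolding pinv_def
  proof (rule the_equality)
    show "A ** P ** A = A \<and> P ** A ** P = P \<and> transpose (A ** P) = A ** P \<and> transpose (P ** A) = P ** A"
      using p1 p2 p3 p4 by blast
    fix B assume "A ** B ** A = A \<and> B ** A ** B = B \<and> transpose (A ** B) = A ** B \<and> transpose (B ** A) = B ** A"
    then show "B = P" using mp_unique[of A B P] p1 p2 p3 p4 by blast
  qed
qed

end


lemma sum_minus_dl: "(\<Sum>j\<in>UNIV - {dl::'n::finite}. f j) = (\<Sum>j\<in>UNIV. f j) - (f dl :: real)"
  by (simp add: sum_diff1)

context kerone begin

lemma A_sum_shift: "(\<Sum>j\<in>UNIV - {dl}. A$i$j * (w$j - w$dl)) = (A *v w)$i"
proof -
  have "(\<Sum>j\<in>UNIV. A$i$j * (w$j - w$dl)) = (\<Sum>j\<in>UNIV. A$i$j * w$j) - w$dl * (\<Sum>j\<in>UNIV. A$i$j)"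
    by (simp add: algebra_simps sum_subtractf sum_distrib_left)
  then show ?thesis using row0[of i] by (simp add: sum_minus_dl matrix_vector_mult_def)
qed

lemma glow_eq: "glow dl A j k = (P *v (axis k 1 - axis dl 1))$j - (P *v (axis k 1 - axis dl 1))$dl"
  unfolding glow_def pinv_eq by (simp add: inner_diff_left inner_axis' )

lemma APb: "i \<noteq> dl \<Longrightarrow> (A *v (P *v (axis k 1 - axis dl 1)))$i = (if i = k then 1 else 0)"
proof -
  assume i: "i \<noteq> dl"
  have "A *v (P *v (axis k 1 - axis dl 1)) = (mat 1 - Jm) *v (axis k 1 - axis dl 1)"
    by (simp add: matrix_vector_mul_assoc AP)
  also have "... = (axis k 1 - axis dl 1) - Jm *v (axis k 1 - axis dl 1)"
    by (simp add: matrix_vector_mult_diff_rdistrib)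
  also have "Jm *v (axis k 1 - axis dl 1) = (0::real^'n)"
  proof -
    have "(\<Sum>j\<in>UNIV. ((if j = k then 1 else 0) - (if j = dl then 1 else 0)) / real CARD('n)) = 0"
      by (simp add: sum_divide_distrib[symmetric] sum_subtractf)
    then show ?thesis by (simp add: Jm_def matrix_vector_mult_def vec_eq_iff axis_def)
  qed
  finally show ?thesis using i by (simp add: axis_def)
qed

definition "Gm dl = (\<chi> i j. if i \<noteq> dl \<and> j \<noteq> dl then glow dl A i j
                                  else if i = dl \<and> j = dl then 1 else (0::real))"
definition "Kb dl = (\<chi> i j. if i \<noteq> dl \<and> j \<noteq> dl then A$i$j
                                  else if i = dl \<and> j = dl then 1 else (0::real))"

lemma KbGm: "Kb dl ** Gm dl = mat 1"
proof -
  have "(\<Sum>j\<in>UNIV. Kb dl $i$j * Gm dl $j$k) = (if i = k then 1 else 0)" for i k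
  proof (cases "i = dl")
    case True
    then have "(\<Sum>j\<in>UNIV. Kb dl $i$j * Gm dl $j$k) = (\<Sum>j\<in>UNIV. (if j = dl then Gm dl $dl$k else 0))"
      by (intro sum.cong) (auto simp: Kb_def)
    then show ?thesis using True by (simp add: Gm_def)
  next
    case False
    show ?thesis
    proof (cases "k = dl")
      case True
      then have "(\<Sum>j\<in>UNIV. Kb dl $i$j * Gm dl $j$k) = (\<Sum>j\<in>UNIV. (if j = dl then Kb dl $i$dl else 0))"
        by (intro sum.cong) (auto simp: Gm_def)
      then show ?thesis using True False by (simp add: Kb_def)
    next
      case kF: False
      have "(\<Sum>j\<in>UNIV. Kb dl $i$j * Gm dl $j$k) = (\<Sum>j\<in>UNIV - {dl}. Kb dl $i$j * Gm dl $j$k)"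
      proof -
        have "Kb dl $ i $ dl = 0" using False by (simp add: Kb_def)
        then show ?thesis by (simp add: sum_minus_dl)
      qed
      also have "... = (\<Sum>j\<in>UNIV - {dl}. A$i$j * ((P *v (axis k 1 - axis dl 1))$j - (P *v (axis k 1 - axis dl 1))$dl))"
        using False kF by (intro sum.cong) (auto simp: Kb_def Gm_def glow_eq)
      also have "... = (if i = k then 1 else 0)" using A_sum_shift APb False by simp
      finally show ?thesis .
    qed
  qed
  then show ?thesis by (simp add: matrix_matrix_mult_def vec_eq_iff mat_def)
qed

lemma gup_eq: "i \<noteq> dl \<Longrightarrow> j \<noteq> dl \<Longrightarrow> gup dl A $ i $ j = A $ i $ j"
proof -
  assume ij: "i \<noteq> dl" "j \<noteq> dl"
  have GK: "Gm dl ** Kb dl = mat 1" using KbGm matrix_left_right_inverse by blast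
  have ex: "\<exists>B. Gm dl ** B = mat 1 \<and> B ** Gm dl = mat 1" using KbGm GK by blast
  have "matrix_inv (Gm dl) = Kb dl"
  proof -
    let ?B = "matrix_inv (Gm dl)"
    have B: "Gm dl ** ?B = mat 1 \<and> ?B ** Gm dl = mat 1"
      unfolding matrix_inv_def by (rule someI_ex[OF ex])
    have "?B = (Kb dl ** Gm dl) ** ?B" using KbGm by simp
    also have "... = Kb dl" using B by (metis matrix_mul_assoc matrix_mul_rid)
    finally show ?thesis .
  qed
  moreover have "gup dl A = matrix_inv (Gm dl)" unfolding gup_def Gm_def by simp
  ultimately show ?thesis using ij by (simp add: Kb_def)
qed

end


lemma coeff_prod_lin:
  fixes a b :: "'i \<Rightarrow> 'a::comm_ring_1"
  assumes "finite S"
  shows "coeff (\<Prod>i\<in>S. [:b i, a i:]) 0 = (\<Prod>i\<in>S. b i)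
       \<and> coeff (\<Prod>i\<in>S. [:b i, a i:]) 1 = (\<Sum>j\<in>S. a j * (\<Prod>i\<in>S - {j}. b i))"
  using assms
proof (induction S rule: finite_induct)
  case empty
  then show ?case by simp
next
  case (insert x S)
  let ?Q = "\<Prod>i\<in>S. [:b i, a i:]"
  have e: "[:b x, a x:] * ?Q = smult (b x) ?Q + pCons 0 (smult (a x) ?Q)"
    by (simp add: mult_pCons_left)
  have s1: "(\<Sum>j\<in>insert x S. a j * (\<Prod>i\<in>insert x S - {j}. b i))
      = a x * (\<Prod>i\<in>S. b i) + (\<Sum>j\<in>S. a j * (b x * (\<Prod>i\<in>S - {j}. b i)))"
  proof -
    have "(\<Sum>j\<in>insert x S. a j * (\<Prod>i\<in>insert x S - {j}. b i))
        = a x * (\<Prod>i\<in>insert x S - {x}. b i) + (\<Sum>j\<in>S. a j * (\<Prod>i\<in>insert x S - {j}. b i))"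
      using insert by (simp add: sum.insert)
    also have "(\<Prod>i\<in>insert x S - {x}. b i) = (\<Prod>i\<in>S. b i)" using insert
      by (metis Diff_insert_absorb)
    also have "(\<Sum>j\<in>S. a j * (\<Prod>i\<in>insert x S - {j}. b i)) = (\<Sum>j\<in>S. a j * (b x * (\<Prod>i\<in>S - {j}. b i)))"
    proof (rule sum.cong)
      fix j assume "j \<in> S"
      then have "insert x S - {j} = insert x (S - {j})" using insert by auto
      then show "a j * (\<Prod>i\<in>insert x S - {j}. b i) = a j * (b x * (\<Prod>i\<in>S - {j}. b i))"
        using insert by (simp add: prod.insert)
    qed simp
    finally show ?thesis .
  qed
  show ?case using insert e s1
    by (simp add: coeff_pCons sum_distrib_left algebra_simps)
qed

lemma coeff_prod_lin_top:
  fixes a b :: "'i \<Rightarrow> 'a::comm_ring_1"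
  assumes "finite S"
  shows "degree (\<Prod>i\<in>S. [:b i, a i:]) \<le> card S
       \<and> coeff (\<Prod>i\<in>S. [:b i, a i:]) (card S) = (\<Prod>i\<in>S. a i)"
  using assms
proof (induction S rule: finite_induct)
  case empty
  then show ?case by simp
next
  case (insert x S)
  let ?Q = "\<Prod>i\<in>S. [:b i, a i:]"
  have e: "[:b x, a x:] * ?Q = smult (b x) ?Q + pCons 0 (smult (a x) ?Q)"
    by (simp add: mult_pCons_left)
  have dq: "degree ?Q \<le> card S" using insert by simp
  have dl: "degree [:b x, a x:] \<le> 1" by simp
  have "degree ([:b x, a x:] * ?Q) \<le> degree [:b x, a x:] + degree ?Q" by (rule degree_mult_le)
  then have d1: "degree ([:b x, a x:] * ?Q) \<le> Suc (card S)" using dq dl by linarith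
  have "coeff ?Q (Suc (card S)) = 0" using insert by (simp add: coeff_eq_0)
  then show ?case using insert e d1 by simp
qed

lemma sum_diag_minus:
  fixes z :: "'a::comm_ring_1"
  shows "(\<Sum>k\<in>(UNIV::'n::finite set). ((if i = k then z else 0) - a k) * v k) = z * v i - (\<Sum>k\<in>UNIV. a k * v k)"
proof -
  have e: "\<And>k. (if i = k then z else 0) * v k = (if k = i then z * v k else 0)" by simp
  have "(\<Sum>k\<in>(UNIV::'n set). (if i = k then z else 0) * v k) = z * v i"
    by (simp only: e sum.delta) simp
  then show ?thesis by (simp add: left_diff_distrib sum_subtractf)
qed

definition Ejj :: "'n \<Rightarrow> real^'n^'n" where "Ejj j = (\<chi> a b. if a = j \<and> b = j then 1 else 0)"

definition Mrep :: "real^'n^'n \<Rightarrow> 'n \<Rightarrow> real^'n^'n" where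
  "Mrep A j = (\<chi> i k. if i = j then (if k = j then 1 else 0) else - A$i$k)"

lemma charpoly_expand:
  "charpoly A = (\<Sum>p\<in>{p. p permutes (UNIV::'n set)}. of_int (sign p) *
       (\<Prod>i\<in>UNIV. [: - (A::real^'n^'n)$i$(p i), (if i = p i then 1 else 0) :]))"
  unfolding charpoly_def det_def
  by (intro sum.cong refl arg_cong2[where f = "(*)"] prod.cong) auto

lemma coeff_of_int_mult: "coeff (of_int k * q) n = of_int k * coeff (q::real poly) (n::nat)"
  by (simp add: of_int_poly)


lemma charpoly_coeff1: "coeff (charpoly (A::real^'n^'n)) 1 = (\<Sum>j\<in>UNIV. det (Mrep A j))"
proof -
  have "coeff (charpoly A) 1 = (\<Sum>p\<in>{p. p permutes (UNIV::'n set)}. of_int (sign p) *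
       (\<Sum>j\<in>UNIV. (if j = p j then 1 else 0) * (\<Prod>i\<in>UNIV - {j}. - A$i$(p i))))"
    unfolding charpoly_expand coeff_sum coeff_of_int_mult
  proof (rule sum.cong[OF refl])
    fix p :: "'n \<Rightarrow> 'n"
    show "of_int (sign p) * coeff (\<Prod>i\<in>UNIV. [: - A$i$(p i), (if i = p i then 1 else 0) :]) 1 =
       of_int (sign p) * (\<Sum>j\<in>UNIV. (if j = p j then 1 else 0) * (\<Prod>i\<in>UNIV - {j}. - A$i$(p i)))"
      using coeff_prod_lin[where S=UNIV and b="\<lambda>i. - A$i$(p i)" and a="\<lambda>i. if i = p i then 1 else 0"]
      by simp
  qed
  also have "... = (\<Sum>j\<in>UNIV. \<Sum>p\<in>{p. p permutes (UNIV::'n set)}. of_int (sign p) *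
       ((if j = p j then 1 else 0) * (\<Prod>i\<in>UNIV - {j}. - A$i$(p i))))"
    by (simp add: sum_distrib_left sum.swap[of _ UNIV])
  also have "... = (\<Sum>j\<in>UNIV. det (Mrep A j))"
  proof (rule sum.cong[OF refl])
    fix j
    show "(\<Sum>p\<in>{p. p permutes (UNIV::'n set)}. of_int (sign p) *
       ((if j = p j then 1 else 0) * (\<Prod>i\<in>UNIV - {j}. - A$i$(p i)))) = det (Mrep A j)"
      unfolding det_def
    proof (rule sum.cong[OF refl])
      fix p
      have "(\<Prod>i\<in>UNIV. Mrep A j $ i $ p i) = Mrep A j $ j $ p j * (\<Prod>i\<in>UNIV - {j}. Mrep A j $ i $ p i)"
        by (simp add: prod.remove)
      also have "(\<Prod>i\<in>UNIV - {j}. Mrep A j $ i $ p i) = (\<Prod>i\<in>UNIV - {j}. - A$i$(p i))"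
        by (rule prod.cong) (auto simp: Mrep_def)
      finally show "of_int (sign p) * ((if j = p j then 1 else 0) * (\<Prod>i\<in>UNIV - {j}. - A$i$(p i)))
          = of_int (sign p) * (\<Prod>i\<in>UNIV. Mrep A j $ i $ p i)"
        by (simp add: Mrep_def eq_commute)
    qed
  qed
  finally show ?thesis .
qed

lemma charpoly_coeff0: "coeff (charpoly (A::real^'n^'n)) 0 = det (\<chi> i k. - A$i$k)"
  unfolding charpoly_expand coeff_sum coeff_of_int_mult det_def
proof (rule sum.cong[OF refl])
  fix p :: "'n \<Rightarrow> 'n"
  show "of_int (sign p) * coeff (\<Prod>i\<in>UNIV. [: - A$i$(p i), (if i = p i then 1 else 0) :]) 0 =
       of_int (sign p) * (\<Prod>i\<in>UNIV. (\<chi> i k. - A$i$k) $ i $ p i)"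
    using coeff_prod_lin[where S=UNIV and b="\<lambda>i. - A$i$(p i)" and a="\<lambda>i. if i = p i then 1 else 0"]
    by simp
qed

lemma charpoly_top: "degree (charpoly (A::real^'n^'n)) \<le> CARD('n) \<and> coeff (charpoly A) CARD('n) = 1"
proof
  show "degree (charpoly A) \<le> CARD('n)"
    unfolding charpoly_expand
  proof (rule degree_sum_le)
    fix p
    show "degree (of_int (sign p) * (\<Prod>i\<in>UNIV. [: - A$i$(p i), (if i = p i then 1 else 0) :])) \<le> CARD('n)"
      by (rule order_trans[OF degree_mult_le])
         (use coeff_prod_lin_top[where S=UNIV and b="\<lambda>i. - A$i$(p i)" and a="\<lambda>i. if i = p i then 1 else 0"] in simp)
  qed simp
  have "coeff (charpoly A) CARD('n) = (\<Sum>p\<in>{p. p permutes (UNIV::'n set)}. of_int (sign p) *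
       (\<Prod>i\<in>UNIV. (if i = p i then 1 else 0::real)))"
    unfolding charpoly_expand coeff_sum coeff_of_int_mult
  proof (rule sum.cong[OF refl])
    fix p :: "'n \<Rightarrow> 'n"
    show "of_int (sign p) * coeff (\<Prod>i\<in>UNIV. [: - A$i$(p i), (if i = p i then 1 else 0) :]) CARD('n) =
       of_int (sign p) * (\<Prod>i\<in>UNIV. (if i = p i then 1 else 0::real))"
      using coeff_prod_lin_top[where S=UNIV and b="\<lambda>i. - A$i$(p i)" and a="\<lambda>i. if i = p i then 1 else 0"]
      by simp
  qed
  also have "... = (\<Sum>p\<in>{p. p permutes (UNIV::'n set)}. if p = id then 1 else 0)"
  proof (rule sum.cong[OF refl])
    fix p :: "'n \<Rightarrow> 'n"
    have "(\<Prod>i\<in>UNIV. (if i = p i then 1 else 0::real)) = (if p = id then 1 else 0)"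
    proof (cases "p = id")
      case False
      then obtain i where "p i \<noteq> i" by (metis eq_id_iff)
      then have "(if i = p i then 1 else 0::real) = 0" by simp
      then have "\<exists>a\<in>UNIV. (if a = p a then 1 else 0::real) = 0" by blast
      then have "(\<Prod>i\<in>UNIV. (if i = p i then 1 else 0::real)) = 0"
        by (rule prod_zero[rotated]) simp
      then show ?thesis using False by simp
    qed simp
    then show "of_int (sign p) * (\<Prod>i\<in>UNIV. (if i = p i then 1 else 0::real)) = (if p = id then 1 else 0)"
      by (simp add: sign_id)
  qed
  also have "... = 1" by (simp add: sum.delta' permutes_id)
  finally show "coeff (charpoly A) CARD('n) = 1" .
qed


lemma det_zero_kernel:
  fixes M :: "'a::field^'n^'n"
  assumes "M *v v = 0" "v \<noteq> 0"
  shows "det M = 0"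
proof (rule ccontr)
  assume "det M \<noteq> 0"
  then have "inj ((*v) M)" using invertible_det_nz inj_matrix_vector_mult by blast
  moreover have "M *v v = M *v 0" using assms by simp
  ultimately show False using assms(2) by (meson injD)
qed

lemma kernel_of_det_zero:
  fixes M :: "'a::field^'n^'n"
  assumes "det M = 0"
  shows "\<exists>v. v \<noteq> 0 \<and> M *v v = 0"
proof -
  have "\<not> invertible M" using assms invertible_det_nz by blast
  then have "\<not> inj ((*v) M)" using invertible_left_inverse matrix_left_invertible_injective by blast
  then obtain x y where "x \<noteq> y" "M *v x = M *v y" unfolding inj_def by blast
  then have "x - y \<noteq> 0" "M *v (x - y) = 0" by (auto simp: matrix_vector_mult_diff_distrib)
  then show ?thesis by blast
qed

context kerone begin

lemma A_one: "A *v (1::real^'n) = 0"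
  using row0 by (simp add: matrix_vector_mult_def vec_eq_iff)

lemma det_A: "det A = 0"
  using det_zero_kernel[OF A_one] by (simp add: vec_eq_iff)

lemma det_negA: "det (\<chi> i k. - A$i$k) = 0"
proof -
  have "(\<chi> i k. - A$i$k) *v (1::real^'n) = 0"
    using row0 by (simp add: matrix_vector_mult_def vec_eq_iff sum_negf)
  then show ?thesis using det_zero_kernel by (metis one_index zero_index zero_neq_one)
qed

lemma det_Mrep: "det (Mrep A j) = (-1) ^ (CARD('n) - 1) * det (A + Ejj j)"
proof -
  let ?N = "\<lambda>i. if i = j then axis j 1 else A$i"
  let ?c = "\<lambda>i. if i = j then 1 else (-1::real)"
  have "Mrep A j = (\<chi> i. ?c i *s ?N i)"
    by (simp add: Mrep_def vec_eq_iff axis_def)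
  then have "det (Mrep A j) = prod ?c UNIV * det (\<chi> i. ?N i)"
    by (simp add: det_rows_mul)
  also have "prod ?c UNIV = (-1) ^ (CARD('n) - 1)"
  proof -
    have "prod ?c UNIV = ?c j * prod ?c (UNIV - {j})" by (rule prod.remove) auto
    also have "prod ?c (UNIV - {j}) = prod (\<lambda>_. -1::real) (UNIV - {j})" by (rule prod.cong) auto
    finally show ?thesis by (simp add: card_Diff_singleton)
  qed
  also have "det (\<chi> i. ?N i) = det (A + Ejj j)"
  proof -
    have "A + Ejj j = (\<chi> i. if i = j then A$i + axis j 1 else A$i)"
      by (simp add: Ejj_def vec_eq_iff axis_def)
    then have "det (A + Ejj j) = det (\<chi> i. if i = j then A$i else A$i) + det (\<chi> i. ?N i)"
      by (simp add: det_row_add)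
    then show ?thesis using det_A by simp
  qed
  finally show ?thesis .
qed

end


lemma det_pos_pd:
  fixes B :: "real^'n^'n"
  assumes pd: "\<And>v. v \<noteq> 0 \<Longrightarrow> v \<bullet> (B *v v) > 0"
  shows "det B > 0"
proof -
  define C where "C s = (\<chi> i k. s * B$i$k + (1 - s) * (if i = k then 1 else 0))" for s :: real
  have Cv: "(C s) *v v = s *\<^sub>R (B *v v) + (1 - s) *\<^sub>R v" for s v
  proof -
    have "(\<Sum>k\<in>UNIV. (s * B$i$k + (1 - s) * (if i = k then 1 else 0)) * v$k)
        = s * (\<Sum>k\<in>UNIV. B$i$k * v$k) + (1 - s) * v$i" for i
    proof -
      have "(\<Sum>k\<in>UNIV. (s * B$i$k + (1 - s) * (if i = k then 1 else 0)) * v$k)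
          = (\<Sum>k\<in>UNIV. s * (B$i$k * v$k) + (if i = k then (1 - s) * v$k else 0))"
        by (rule sum.cong) (auto simp: algebra_simps)
      also have "... = (\<Sum>k\<in>UNIV. s * (B$i$k * v$k)) + (\<Sum>k\<in>UNIV. (if i = k then (1 - s) * v$k else 0))"
        by (rule sum.distrib)
      also have "... = s * (\<Sum>k\<in>UNIV. B$i$k * v$k) + (1 - s) * v$i"
        by (simp add: sum_distrib_left)
      finally show ?thesis .
    qed
    then show ?thesis by (simp add: C_def matrix_vector_mult_def vec_eq_iff)
  qed
  have nz: "det (C s) \<noteq> 0" if s: "0 \<le> s" "s \<le> 1" for s
  proof
    assume "det (C s) = 0"
    then obtain v where v: "v \<noteq> 0" "C s *v v = 0" using kernel_of_det_zero by blast
    have "v \<bullet> (C s *v v) = s * (v \<bullet> (B *v v)) + (1 - s) * (v \<bullet> v)"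
      by (simp add: Cv inner_add_right)
    moreover have "s * (v \<bullet> (B *v v)) + (1 - s) * (v \<bullet> v) > 0"
    proof (cases "s = 0")
      case True then show ?thesis using v by simp
    next
      case False
      then have "s * (v \<bullet> (B *v v)) > 0" using s pd[OF v(1)] by simp
      moreover have "(1 - s) * (v \<bullet> v) \<ge> 0" using s by simp
      ultimately show ?thesis by linarith
    qed
    ultimately show False using v by simp
  qed
  have cont: "continuous_on {0..1} (\<lambda>s. det (C s))"
    unfolding det_def C_def by (simp, intro continuous_intros)
  have "C 0 = mat 1" by (simp add: C_def mat_def vec_eq_iff)
  then have d0: "det (C 0) = 1" by simp
  have "C 1 = B" by (simp add: C_def vec_eq_iff)
  show ?thesis
  proof (rule ccontr)
    assume "\<not> det B > 0"
    then have "det (C 1) \<le> 0" using \<open>C 1 = B\<close> by simp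
    then obtain s where "0 \<le> s" "s \<le> 1" "det (C s) = 0"
      using IVT2'[of "\<lambda>s. det (C s)" 1 0 0] cont d0 by auto
    then show False using nz by blast
  qed
qed


lemma mpr_add: "map_poly (of_real::real\<Rightarrow>'a::real_algebra_1) (p + q) = map_poly of_real p + map_poly of_real q"
  by (simp add: poly_eq_iff coeff_map_poly)

lemma mpr_mult: "map_poly (of_real::real\<Rightarrow>'a::{real_algebra_1,comm_ring_1}) (p * q) = map_poly of_real p * map_poly of_real q"
  by (simp add: poly_eq_iff coeff_map_poly coeff_mult of_real_sum)

lemma mpr_sum: "map_poly (of_real::real\<Rightarrow>'a::real_algebra_1) (\<Sum>x\<in>S. f x) = (\<Sum>x\<in>S. map_poly of_real (f x))"
  by (induction S rule: infinite_finite_induct) (auto simp: mpr_add)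

lemma mpr_prod: "map_poly (of_real::real\<Rightarrow>'a::{real_algebra_1,comm_ring_1}) (\<Prod>x\<in>S. f x) = (\<Prod>x\<in>S. map_poly of_real (f x))"
  by (induction S rule: infinite_finite_induct) (auto simp: mpr_mult)

lemma mpr_of_int: "map_poly (of_real::real\<Rightarrow>'a::{real_algebra_1,comm_ring_1}) (of_int k) = of_int k"
  by (simp add: poly_eq_iff coeff_map_poly of_int_poly coeff_pCons split: nat.split)

lemma charpoly_eval:
  fixes z :: "'a::real_field"
  shows "poly (map_poly of_real (charpoly (A::real^'n^'n))) z
       = det (\<chi> i k. (if i = k then z else 0) - of_real (A$i$k))"
  unfolding charpoly_expand mpr_sum poly_sum det_def
proof (rule sum.cong[OF refl])
  fix p :: "'n \<Rightarrow> 'n"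
  have "poly (map_poly of_real (\<Prod>i\<in>UNIV. [: - A$i$(p i), (if i = p i then 1 else 0) :])) z
      = (\<Prod>i\<in>UNIV. (\<chi> i k. (if i = k then z else 0) - of_real (A$i$k)) $ i $ p i)"
    unfolding mpr_prod poly_prod
  proof (rule prod.cong[OF refl])
    fix i
    show "poly (map_poly of_real [: - A$i$(p i), (if i = p i then 1 else 0) :]) z
      = (\<chi> i k. (if i = k then z else 0) - of_real (A$i$k)) $ i $ p i"
      by (cases "i = p i") (auto simp: map_poly_pCons)
  qed
  then show "poly (map_poly of_real (of_int (sign p) * (\<Prod>i\<in>UNIV. [: - A$i$(p i), (if i = p i then 1 else 0) :]))) z
      = of_int (sign p) * (\<Prod>i\<in>UNIV. (\<chi> i k. (if i = k then z else 0) - of_real (A$i$k)) $ i $ p i)"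
    by (simp add: mpr_mult mpr_of_int)
qed

lemma charpoly_eval_real:
  "poly (charpoly (A::real^'n^'n)) r = det (\<chi> i k. (if i = k then r else 0) - A$i$k)"
  using charpoly_eval[of A r] by (simp add: map_poly_idI)

lemma poly_mpr_real: "poly (map_poly (of_real::real\<Rightarrow>'a::real_field) p) (of_real r) = of_real (poly p r)"
  by (induction p) (auto simp: map_poly_pCons)


lemma sym_real_roots:
  fixes A :: "real^'n^'n"
  assumes sym: "\<And>i j. A$i$j = A$j$i"
    and z: "poly (map_poly complex_of_real (charpoly A)) z = 0"
  shows "Im z = 0"
proof -
  let ?M = "(\<chi> i k. (if i = k then z else 0) - complex_of_real (A$i$k))"
  have "det ?M = 0" using z charpoly_eval[of A z] by simp
  then obtain v where v: "v \<noteq> 0" "?M *v v = 0" using kernel_of_det_zero by blast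
  have ev: "(\<Sum>k\<in>UNIV. complex_of_real (A$i$k) * v$k) = z * v$i" for i
  proof -
    have "(?M *v v)$i = 0" using v by simp
    then have "(\<Sum>k\<in>UNIV. ((if i = k then z else 0) - complex_of_real (A$i$k)) * v$k) = 0"
      by (simp add: matrix_vector_mult_def)
    then show ?thesis using sum_diag_minus[of i z "\<lambda>k. complex_of_real (A$i$k)" "\<lambda>k. v$k"] by simp
  qed
  define S where "S = (\<Sum>i\<in>UNIV. cnj (v$i) * (\<Sum>k\<in>UNIV. complex_of_real (A$i$k) * v$k))"
  have S1: "S = z * (\<Sum>i\<in>UNIV. cnj (v$i) * v$i)"
    unfolding S_def ev by (simp add: sum_distrib_left algebra_simps)
  have "cnj S = (\<Sum>i\<in>UNIV. v$i * (\<Sum>k\<in>UNIV. complex_of_real (A$i$k) * cnj (v$k)))"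
    unfolding S_def by (simp add: cnj_sum)
  also have "... = (\<Sum>i\<in>UNIV. \<Sum>k\<in>UNIV. complex_of_real (A$i$k) * v$i * cnj (v$k))"
    by (simp add: sum_distrib_left algebra_simps)
  also have "... = (\<Sum>k\<in>UNIV. \<Sum>i\<in>UNIV. complex_of_real (A$i$k) * v$i * cnj (v$k))"
    by (rule sum.swap)
  also have "... = S"
    unfolding S_def by (simp add: sum_distrib_left algebra_simps sym)
  finally have "Im (cnj S) = Im S" by simp
  then have ImS: "Im S = 0" by simp
  define n where "n = (\<Sum>i\<in>UNIV. (cmod (v$i))^2)"
  have N: "(\<Sum>i\<in>UNIV. cnj (v$i) * v$i) = complex_of_real n"
    unfolding n_def of_real_sum
    by (intro sum.cong refl) (metis complex_norm_square mult.commute)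
  obtain i0 where "v$i0 \<noteq> 0" using v(1) by (auto simp: vec_eq_iff)
  then have "(cmod (v$i0))^2 > 0" by simp
  moreover have "(cmod (v$i0))^2 \<le> n" unfolding n_def
    by (rule member_le_sum) auto
  ultimately have "n > 0" by linarith
  moreover have "Im S = Im z * n" using S1 N by simp
  ultimately show ?thesis using ImS by simp
qed


lemma real_poly_decompose:
  fixes p :: "real poly"
  shows "(\<forall>z. poly (map_poly complex_of_real p) z = 0 \<longrightarrow> Im z = 0) \<Longrightarrow>
    smult (lead_coeff p) (\<Prod>r|poly p r = 0. [:-r, 1:] ^ order r p) = p"
proof (induction p rule: poly_root_order_induct)
  case (no_roots p)
  show ?case
  proof (cases "degree p = 0")
    case False
    have "degree (map_poly complex_of_real p) = degree p"
      by (simp add: degree_map_poly)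
    then have "\<not> constant (poly (map_poly complex_of_real p))"
      using False by (subst constant_degree) simp
    then obtain z where z: "poly (map_poly complex_of_real p) z = 0"
      using fundamental_theorem_of_algebra by blast
    then have "Im z = 0" using no_roots.prems by blast
    then have "z = complex_of_real (Re z)" by (simp add: complex_eq_iff)
    then have "poly (map_poly complex_of_real p) (complex_of_real (Re z)) = 0" using z by metis
    then have "complex_of_real (poly p (Re z)) = 0" using poly_mpr_real[of p "Re z"] by metis
    then show ?thesis using no_roots.hyps by simp
  qed (auto elim!: degree_eq_zeroE)
next
  case (root p x n)
  have H: "\<forall>z. poly (map_poly complex_of_real p) z = 0 \<longrightarrow> Im z = 0"
    using root.prems by (simp add: mpr_mult)
  from root have *: "{z. poly ([:- x, 1:] ^ n * p) z = 0} = insert x {z. poly p z = 0}"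
    by auto
  have "smult (lead_coeff ([:-x, 1:] ^ n * p)) 
           (\<Prod>z|poly ([:-x,1:] ^ n * p) z = 0. [:-z, 1:] ^ order z ([:- x, 1:] ^ n * p)) = 
        [:- x, 1:] ^ order x ([:- x, 1:] ^ n * p) * 
          smult (lead_coeff p) (\<Prod>z\<in>{z. poly p z = 0}. [:- z, 1:] ^ order z ([:- x, 1:] ^ n * p))"
    by (subst *, subst prod.insert) 
       (insert root, auto intro: poly_roots_finite simp: mult_ac lead_coeff_mult lead_coeff_power)
  also have "order x ([:- x, 1:] ^ n * p) = n"
    using root by (subst order_mult) (auto simp: order_power_n_n order_0I)
  also have "(\<Prod>z\<in>{z. poly p z = 0}. [:- z, 1:] ^ order z ([:- x, 1:] ^ n * p)) =
               (\<Prod>z\<in>{z. poly p z = 0}. [:- z, 1:] ^ order z p)"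
  proof (intro prod.cong refl, goal_cases)
    case (1 y)
    with root have "order y ([:-x,1:] ^ n) = 0" by (intro order_0I) auto 
    thus ?case using root by (subst order_mult) auto
  qed
  also note root.IH[OF H]
  finally show ?case .
qed simp_all


locale kerpsd = kerone A for A :: "real^'n^'n" +
  assumes psd: "\<And>v. v \<bullet> (A *v v) \<ge> 0"
    and qker: "\<And>v i j. v \<bullet> (A *v v) = 0 \<Longrightarrow> v$i = v$j"
begin

lemma det_AE_pos: "det (A + Ejj j) > 0"
proof (rule det_pos_pd)
  fix v :: "real^'n" assume v: "v \<noteq> 0"
  have e: "v \<bullet> ((A + Ejj j) *v v) = v \<bullet> (A *v v) + (v$j)^2"
  proof -
    have "(A + Ejj j) *v v = A *v v + Ejj j *v v" by (simp add: matrix_vector_mult_add_rdistrib)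
    moreover have "Ejj j *v v = axis j (v$j)"
    proof -
      have "(\<Sum>k\<in>UNIV. (if i = j \<and> k = j then 1 else 0) * v$k) = (if i = j then v$j else 0)" for i
      proof -
        have "(\<lambda>k. (if i = j \<and> k = j then 1 else 0) * v$k) = (\<lambda>k. if k = j then (if i = j then v$j else 0) else 0)"
          by auto
        then have "(\<Sum>k\<in>UNIV. (if i = j \<and> k = j then 1 else 0) * v$k) = (\<Sum>k\<in>UNIV. if k = j then (if i = j then v$j else 0) else 0)"
          by (rule arg_cong[where f = "\<lambda>f. sum f UNIV"])
        also have "... = (if i = j then v$j else 0)" by (subst sum.delta) auto
        finally show ?thesis .
      qed
      then show ?thesis by (simp add: Ejj_def matrix_vector_mult_def vec_eq_iff axis_def)
    qed
    ultimately show ?thesis by (simp add: inner_add_right inner_axis power2_eq_square)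
  qed
  show "v \<bullet> ((A + Ejj j) *v v) > 0"
  proof (cases "v \<bullet> (A *v v) = 0")
    case True
    then have c: "\<And>i. v$i = v$j" using qker by blast
    have "v$j \<noteq> 0"
    proof
      assume "v$j = 0" then have "v = 0" using c by (simp add: vec_eq_iff)
      then show False using v by simp
    qed
    then show ?thesis using e True by simp
  next
    case False
    then have "v \<bullet> (A *v v) > 0" using psd[of v] by linarith
    then show ?thesis using e by (simp add: add_pos_nonneg)
  qed
qed

lemma roots_nonneg:
  assumes "poly (charpoly A) r = 0" shows "r \<ge> 0"
proof -
  let ?M = "(\<chi> i k. (if i = k then r else 0) - A$i$k)"
  have "det ?M = 0" using assms charpoly_eval_real[of A r] by simp
  then obtain v where v: "v \<noteq> 0" "?M *v v = 0" using kernel_of_det_zero by blast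
  have "?M *v v = r *\<^sub>R v - A *v v"
  proof -
    have "(\<Sum>k\<in>UNIV. ((if i = k then r else 0) - A$i$k) * v$k) = r * v$i - (\<Sum>k\<in>UNIV. A$i$k * v$k)" for i
      using sum_diag_minus[of i r "\<lambda>k. A$i$k" "\<lambda>k. v$k"] by simp
    then show ?thesis by (simp add: matrix_vector_mult_def vec_eq_iff)
  qed
  then have Av: "A *v v = r *\<^sub>R v" using v by simp
  have "v \<bullet> (A *v v) = r * (v \<bullet> v)" using Av by simp
  moreover have "v \<bullet> v > 0" using v by simp
  ultimately show ?thesis using psd[of v]
    by (metis linorder_not_le mult_neg_pos)
qed

lemma pos_eig_prod_eq: "pos_eig_prod A = (\<Sum>j\<in>UNIV. det (A + Ejj j))"
proof -
  define p where "p = charpoly A"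
  define d where "d = CARD('n)"
  have top: "degree p \<le> d" "coeff p d = 1" using charpoly_top[of A] unfolding p_def d_def by auto
  then have degp: "degree p = d" using le_degree[of p d] by simp
  then have lc: "lead_coeff p = 1" using top by simp
  then have pnz: "p \<noteq> 0" by auto
  have c1: "coeff p 1 = (-1)^(d - 1) * (\<Sum>j\<in>UNIV. det (A + Ejj j))"
    unfolding p_def d_def charpoly_coeff1 det_Mrep by (simp add: sum_distrib_left)
  have spos: "(\<Sum>j\<in>UNIV. det (A + Ejj j)) > 0"
    using det_AE_pos by (simp add: sum_pos)
  have c1nz: "coeff p 1 \<noteq> 0" using c1 spos by simp
  have p0: "poly p 0 = 0" unfolding p_def poly_0_coeff_0 charpoly_coeff0 using det_negA by simp
  have ord0: "order 0 p = 1"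
  proof -
    have "order 0 p \<noteq> 0" using p0 pnz order_root by blast
    moreover have "\<not> order 0 p \<ge> 2"
    proof
      assume "order 0 p \<ge> 2"
      then have "[:-0, 1:] ^ 2 dvd p" using order_divides by blast
      then obtain s where "p = [:0, 1:] ^ 2 * s" by auto
      then have "p = pCons 0 (pCons 0 s)" by (simp add: power2_eq_square)
      then have "coeff p 1 = 0" by simp
      then show False using c1nz by simp
    qed
    ultimately show ?thesis by linarith
  qed
  define R where "R = {r. poly p r = 0}"
  have finR: "finite R" unfolding R_def using pnz poly_roots_finite by blast
  have R0: "0 \<in> R" unfolding R_def using p0 by simp
  have Rnn: "\<And>r. r \<in> R \<Longrightarrow> r \<ge> 0" unfolding R_def p_def using roots_nonneg by blast
  have H: "\<forall>z. poly (map_poly complex_of_real p) z = 0 \<longrightarrow> Im z = 0"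
    unfolding p_def using sym_real_roots[of A] sym by blast
  define Q where "Q = (\<Prod>r\<in>R - {0}. [:-r, 1:] ^ order r p)"
  have "p = (\<Prod>r\<in>R. [:-r, 1:] ^ order r p)"
    using real_poly_decompose[OF H] lc unfolding R_def by simp
  also have "... = [:-0, 1:] ^ order 0 p * Q"
    unfolding Q_def by (rule prod.remove[OF finR R0])
  finally have pQ: "p = pCons 0 Q" using ord0 by simp
  have "coeff p 1 = poly Q 0" using pQ by (simp add: poly_0_coeff_0)
  also have "poly Q 0 = (\<Prod>r\<in>R - {0}. (- r) ^ order r p)"
    unfolding Q_def by (simp add: poly_prod)
  also have "... = (\<Prod>r\<in>R - {0}. (-1) ^ order r p * r ^ order r p)"
    by (rule prod.cong[OF refl]) (rule power_minus)
  also have "... = (\<Prod>r\<in>R - {0}. (-1::real) ^ order r p) * (\<Prod>r\<in>R - {0}. r ^ order r p)"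
    by (simp add: prod.distrib)
  finally have "\<bar>coeff p 1\<bar> = \<bar>\<Prod>r\<in>R - {0}. r ^ order r p\<bar>"
    by (simp add: abs_mult abs_prod power_abs)
  moreover have "(\<Prod>r\<in>R - {0}. r ^ order r p) \<ge> 0"
    using Rnn by (intro prod_nonneg) auto
  moreover have "{r. r > 0 \<and> poly p r = 0} = R - {0}"
    using Rnn unfolding R_def by force
  ultimately have "pos_eig_prod A = \<bar>coeff p 1\<bar>"
    unfolding pos_eig_prod_def p_def by simp
  also have "... = (\<Sum>j\<in>UNIV. det (A + Ejj j))"
    using c1 spos by (simp add: abs_mult)
  finally show ?thesis .
qed

lemma pos_eig_prod_pos: "pos_eig_prod A > 0"
  unfolding pos_eig_prod_eq using det_AE_pos by (simp add: sum_pos)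

end


lemma theta_sym: "theta \<phi> s t = theta \<phi> t s"
proof (cases "s = t")
  case False
  have "(t - s) / (deriv \<phi> t - deriv \<phi> s) = (- (s - t)) / (- (deriv \<phi> s - deriv \<phi> t))" by simp
  also have "... = (s - t) / (deriv \<phi> s - deriv \<phi> t)" by (rule minus_divide_divide)
  finally show ?thesis using False by (simp add: theta_def)
qed simp

locale setting =
  fixes Q :: "real^'n^'n" and xs :: "real^'n" and \<phi> :: "real \<Rightarrow> real"
  assumes Q_offdiag: "\<forall>i j. i \<noteq> j \<longrightarrow> Q$i$j \<ge> 0"
    and Q_conn: "\<forall>i j. (i, j) \<in> ({(a, b). a \<noteq> b \<and> Q$a$b > 0} \<union> {(a, b). a \<noteq> b \<and> Q$b$a > 0})\<^sup>*"
    and xs_pos: "\<forall>i. xs$i > 0"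
    and db: "\<forall>i j. Q$i$j * xs$i = Q$j$i * xs$j"
    and \<phi>_smooth: "smooth_pos \<phi>"
    and \<phi>_conv: "\<forall>t>0. deriv (deriv \<phi>) t > 0"
begin

lemma dphi_deriv: "t > 0 \<Longrightarrow> (deriv \<phi> has_real_derivative deriv (deriv \<phi>) t) (at t)"
  using \<phi>_smooth unfolding smooth_pos_def
  by (metis DERIV_deriv_iff_real_differentiable One_nat_def funpow.simps(2) funpow_0 o_apply)

lemma theta_pos: "s > 0 \<Longrightarrow> t > 0 \<Longrightarrow> theta \<phi> s t > 0"
proof -
  have main: "theta \<phi> a b > 0" if ab: "0 < a" "a < b" for a b
  proof -
    obtain w where w: "a < w" "w < b" "deriv \<phi> b - deriv \<phi> a = (b - a) * deriv (deriv \<phi>) w"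
      using MVT2[of a b "deriv \<phi>" "deriv (deriv \<phi>)"] ab dphi_deriv by force
    have "deriv (deriv \<phi>) w > 0" using \<phi>_conv w ab by auto
    then have "deriv \<phi> b - deriv \<phi> a > 0" using w ab by simp
    then show ?thesis unfolding theta_def using ab
      by (simp add: divide_pos_pos divide_neg_neg)
  qed
  assume st: "s > 0" "t > 0"
  consider "s = t" | "s < t" | "t < s" by linarith
  then show ?thesis
  proof cases
    case 1 then show ?thesis using \<phi>_conv st by (simp add: theta_def)
  next
    case 2 then show ?thesis using main st by blast
  next
    case 3 then show ?thesis using main[of t s] st theta_sym by metis
  qed
qed

definition cc :: "real^'n \<Rightarrow> 'n \<Rightarrow> 'n \<Rightarrow> real" where
  "cc z i j = (if i = j then 0 else Q$i$j * xs$i * theta \<phi> (z$i / xs$i) (z$j / xs$j))"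

lemma cc_sym: "cc z i j = cc z j i"
  unfolding cc_def using db theta_sym by metis

lemma K_sym: "Kmat Q xs \<phi> z $ i $ j = Kmat Q xs \<phi> z $ j $ i"
proof (cases "i = j")
  case False
  then show ?thesis using cc_sym[of z i j] by (simp add: Kmat_def cc_def)
qed simp

lemma K_offdiag: "i \<noteq> j \<Longrightarrow> Kmat Q xs \<phi> z $ i $ j = - cc z i j"
  by (simp add: Kmat_def cc_def)

lemma cc_diag: "cc z i i = 0" by (simp add: cc_def)

lemma cc_sum: "(\<Sum>k\<in>UNIV. cc z i k) = (\<Sum>k\<in>UNIV - {i}. cc z i k)"
proof -
  have "(\<Sum>k\<in>UNIV. cc z i k) = cc z i i + (\<Sum>k\<in>UNIV - {i}. cc z i k)" by (rule sum.remove) auto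
  then show ?thesis by (simp add: cc_diag)
qed

lemma cc_sum_v: "(\<Sum>k\<in>UNIV. cc z i k * v$k) = (\<Sum>k\<in>UNIV - {i}. cc z i k * v$k)"
proof -
  have "(\<Sum>k\<in>UNIV. cc z i k * v$k) = cc z i i * v$i + (\<Sum>k\<in>UNIV - {i}. cc z i k * v$k)" by (rule sum.remove) auto
  then show ?thesis by (simp add: cc_diag)
qed

lemma K_diag: "Kmat Q xs \<phi> z $ i $ i = (\<Sum>k\<in>UNIV. cc z i k)"
proof -
  have "(\<Sum>k\<in>UNIV - {i}. cc z i k) = (\<Sum>k\<in>UNIV - {i}. Q$i$k * xs$i * theta \<phi> (z$i / xs$i) (z$k / xs$k))"
    by (rule sum.cong) (auto simp: cc_def)
  then show ?thesis by (simp add: Kmat_def cc_sum)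
qed

lemma K_row_v: "(\<Sum>j\<in>UNIV. Kmat Q xs \<phi> z $ i $ j * v$j) = (\<Sum>k\<in>UNIV. cc z i k) * v$i - (\<Sum>j\<in>UNIV. cc z i j * v$j)"
proof -
  have "(\<Sum>j\<in>UNIV. Kmat Q xs \<phi> z $ i $ j * v$j) = Kmat Q xs \<phi> z $ i $ i * v$i + (\<Sum>j\<in>UNIV - {i}. Kmat Q xs \<phi> z $ i $ j * v$j)"
    by (rule sum.remove) auto
  also have "(\<Sum>j\<in>UNIV - {i}. Kmat Q xs \<phi> z $ i $ j * v$j) = (\<Sum>j\<in>UNIV - {i}. - (cc z i j * v$j))"
    by (rule sum.cong) (auto simp: K_offdiag)
  also have "... = - (\<Sum>j\<in>UNIV. cc z i j * v$j)" by (simp add: sum_negf cc_sum_v)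
  finally show ?thesis by (simp add: K_diag)
qed

lemma K_row0: "(\<Sum>j\<in>UNIV. Kmat Q xs \<phi> z $ i $ j) = 0"
  using K_row_v[of z i 1] by simp

lemma K_mult: "(Kmat Q xs \<phi> z *v v)$i = (\<Sum>j\<in>UNIV. cc z i j * (v$i - v$j))"
proof -
  have "(Kmat Q xs \<phi> z *v v)$i = (\<Sum>j\<in>UNIV. Kmat Q xs \<phi> z $ i $ j * v$j)"
    unfolding matrix_vector_mult_def by simp
  also have "... = (\<Sum>k\<in>UNIV. cc z i k) * v$i - (\<Sum>j\<in>UNIV. cc z i j * v$j)"
    by (rule K_row_v)
  also have "... = (\<Sum>j\<in>UNIV. cc z i j * (v$i - v$j))"
    by (simp add: sum_distrib_right right_diff_distrib sum_subtractf)
  finally show ?thesis .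
qed

lemma K_quad: "2 * (v \<bullet> (Kmat Q xs \<phi> z *v v)) = (\<Sum>i\<in>UNIV. \<Sum>j\<in>UNIV. cc z i j * (v$i - v$j)^2)"
proof -
  have a: "v \<bullet> (Kmat Q xs \<phi> z *v v) = (\<Sum>i\<in>UNIV. \<Sum>j\<in>UNIV. cc z i j * (v$i * (v$i - v$j)))"
    by (simp add: inner_vec_def K_mult sum_distrib_left algebra_simps)
  have b: "(\<Sum>i\<in>UNIV. \<Sum>j\<in>UNIV. cc z i j * (v$i * (v$i - v$j)))
      = (\<Sum>i\<in>UNIV. \<Sum>j\<in>UNIV. cc z i j * (v$j * (v$j - v$i)))"
    by (subst sum.swap) (simp add: cc_sym)
  have "2 * (v \<bullet> (Kmat Q xs \<phi> z *v v)) = (\<Sum>i\<in>UNIV. \<Sum>j\<in>UNIV. cc z i j * (v$i * (v$i - v$j)))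
      + (\<Sum>i\<in>UNIV. \<Sum>j\<in>UNIV. cc z i j * (v$j * (v$j - v$i)))"
    using a b by simp
  also have "... = (\<Sum>i\<in>UNIV. \<Sum>j\<in>UNIV. cc z i j * (v$i - v$j)^2)"
    by (simp add: sum.distrib[symmetric] power2_eq_square algebra_simps)
  finally show ?thesis .
qed

lemma cc_nonneg: "\<forall>i. z$i > 0 \<Longrightarrow> cc z i j \<ge> 0"
proof -
  assume z: "\<forall>i. z$i > 0"
  have "xs$i > 0" "xs$j > 0" using xs_pos by auto
  moreover have "z$i > 0" "z$j > 0" using z by auto
  ultimately have t: "theta \<phi> (z$i / xs$i) (z$j / xs$j) > 0" using theta_pos by simp
  show ?thesis
  proof (cases "i = j")
    case False
    then have "Q$i$j \<ge> 0" using Q_offdiag by auto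
    then show ?thesis using False t \<open>xs$i > 0\<close> by (simp add: cc_def)
  qed (simp add: cc_def)
qed

lemma cc_pos: "\<forall>i. z$i > 0 \<Longrightarrow> i \<noteq> j \<Longrightarrow> Q$i$j > 0 \<Longrightarrow> cc z i j > 0"
  unfolding cc_def using xs_pos theta_pos[of "z$i / xs$i" "z$j / xs$j"]
  by (auto intro!: mult_pos_pos)

lemma K_psd: "\<forall>i. z$i > 0 \<Longrightarrow> v \<bullet> (Kmat Q xs \<phi> z *v v) \<ge> 0"
  using K_quad[of v z] cc_nonneg[of z]
  by (smt (verit, del_insts) sum_nonneg zero_le_power2 mult_nonneg_nonneg)

lemma K_qker:
  assumes z: "\<forall>i. z$i > 0" and q: "v \<bullet> (Kmat Q xs \<phi> z *v v) = 0"
  shows "v$i = v$j"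
proof -
  have nn: "\<And>a b. cc z a b * (v$a - v$b)^2 \<ge> 0" using cc_nonneg[OF z] by simp
  have "(\<Sum>a\<in>UNIV. \<Sum>b\<in>UNIV. cc z a b * (v$a - v$b)^2) = 0" using K_quad[of v z] q by simp
  then have "\<forall>a\<in>UNIV. (\<Sum>b\<in>UNIV. cc z a b * (v$a - v$b)^2) = 0"
    using nn by (subst sum_nonneg_eq_0_iff[symmetric]) (auto intro: sum_nonneg)
  then have zero: "\<And>a b. cc z a b * (v$a - v$b)^2 = 0"
    using nn by (simp add: sum_nonneg_eq_0_iff)
  have edge: "v$a = v$b" if "a \<noteq> b" "Q$a$b > 0" for a b
  proof -
    have "cc z a b > 0" using cc_pos[OF z that] .
    then show ?thesis using zero[of a b] by simp
  qed
  have "(i, j) \<in> ({(a, b). a \<noteq> b \<and> Q$a$b > 0} \<union> {(a, b). a \<noteq> b \<and> Q$b$a > 0})\<^sup>*"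
    using Q_conn by blast
  then show ?thesis
  proof (induction rule: rtrancl_induct)
    case base then show ?case by simp
  next
    case (step b c)
    have "v$b = v$c"
    proof (cases "Q$b$c > 0")
      case True then show ?thesis using step edge by auto
    next
      case False
      then have "b \<noteq> c" "Q$c$b > 0" using step by auto
      then have "Q$c$b * xs$c > 0" using xs_pos by simp
      then have "Q$b$c * xs$b > 0" using db by metis
      then have "Q$b$c > 0" using xs_pos by (simp add: zero_less_mult_iff) (meson not_less_iff_gr_or_eq xs_pos)
      then show ?thesis using \<open>b \<noteq> c\<close> edge by auto
    qed
    then show ?case using step by simp
  qed
qed

lemma K_kerpsd: "\<forall>i. z$i > 0 \<Longrightarrow> kerpsd (Kmat Q xs \<phi> z)"
  apply unfold_locales
  using K_sym K_row0 K_psd K_qker apply auto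
  done

end


context setting begin

definition hq :: "real \<Rightarrow> real \<Rightarrow> real" where
  "hq s t = (if s = t then deriv (deriv \<phi>) s else (deriv \<phi> s - deriv \<phi> t) / (s - t))"

lemma theta_hq: "theta \<phi> s t = 1 / hq s t"
  unfolding theta_def hq_def by simp

lemma ddphi_deriv: "t > 0 \<Longrightarrow> (deriv (deriv \<phi>) has_real_derivative deriv (deriv (deriv \<phi>)) t) (at t)"
proof -
  assume t: "t > 0"
  have "((deriv ^^ 2) \<phi>) differentiable (at t)" using \<phi>_smooth t unfolding smooth_pos_def by blast
  moreover have "(deriv ^^ 2) \<phi> = deriv (deriv \<phi>)" by (simp add: numeral_2_eq_2)
  ultimately show ?thesis by (simp add: DERIV_deriv_iff_real_differentiable)
qed

lemma dphi_differentiable: "t > 0 \<Longrightarrow> deriv \<phi> differentiable (at t)"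
  using dphi_deriv real_differentiable_def by blast

lemma hq_diag:
  assumes s0: "s0 > 0"
  shows "((\<lambda>p. hq (fst p) (snd p)) has_derivative
           (\<lambda>p. deriv (deriv (deriv \<phi>)) s0 / 2 * (fst p + snd p))) (at (s0, s0))"
proof -
  define c where "c = deriv (deriv (deriv \<phi>)) s0"
  define a where "a = deriv (deriv \<phi>) s0"
  have D: "(deriv (deriv \<phi>) has_derivative (\<lambda>h. c * h)) (at s0)"
    using ddphi_deriv[OF s0] unfolding c_def has_field_derivative_def by simp
  have bl: "bounded_linear (\<lambda>p::real\<times>real. c / 2 * (fst p + snd p))"
    by (intro bounded_linear_intros)
  show ?thesis
    unfolding c_def[symmetric] has_derivative_at_alt
  proof (intro conjI allI impI bl)
    fix e :: real assume e: "e > 0"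
    obtain d1 where d1: "d1 > 0" and
      d1b: "\<And>w. norm (w - s0) < d1 \<Longrightarrow> norm (deriv (deriv \<phi>) w - deriv (deriv \<phi>) s0 - c * (w - s0)) \<le> e * norm (w - s0)"
      using D e unfolding has_derivative_at_alt by blast
    define d where "d = min d1 s0"
    have "d > 0" using d1 s0 by (simp add: d_def)
    moreover have "norm (hq (fst y) (snd y) - hq (fst (s0, s0)) (snd (s0, s0)) - c / 2 * (fst (y - (s0, s0)) + snd (y - (s0, s0))))
        \<le> e * norm (y - (s0, s0))" if y: "norm (y - (s0, s0)) < d" for y
    proof -
      obtain s t where yst: "y = (s, t)" by fastforce
      define r where "r = norm (y - (s0, s0))"
      have rs: "\<bar>s - s0\<bar> \<le> r" using norm_fst_le[where x="s - s0" and y="t - s0"] by (simp add: r_def yst)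
      have rt: "\<bar>t - s0\<bar> \<le> r" using norm_snd_le[where x="s - s0" and y="t - s0"] by (simp add: r_def yst)
      have rd: "r < d" using y by (simp add: r_def)
      have bound: "\<bar>deriv (deriv \<phi>) w - a - c * (w - s0)\<bar> \<le> e * r" if w: "\<bar>w - s0\<bar> \<le> r" for w
      proof -
        have "\<bar>w - s0\<bar> < d1" using w rd by (simp add: d_def)
        then have "norm (deriv (deriv \<phi>) w - a - c * (w - s0)) \<le> e * norm (w - s0)"
          using d1b unfolding a_def by (simp add: real_norm_def)
        then have "\<bar>deriv (deriv \<phi>) w - a - c * (w - s0)\<bar> \<le> e * \<bar>w - s0\<bar>" by simp
        also have "... \<le> e * r" using w e by (simp add: mult_left_mono)
        finally show ?thesis .
      qed
      have goal: "\<bar>hq s t - a - c / 2 * ((s - s0) + (t - s0))\<bar> \<le> e * r"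
      proof (cases "s = t")
        case True
        then show ?thesis using bound[OF rs] by (simp add: hq_def algebra_simps)
      next
        case False
        define ps where "ps w = deriv \<phi> w - a * w - c * (w - s0)^2 / 2" for w
        define lo where "lo = min s t"
        define hi where "hi = max s t"
        have lohi: "lo < hi" using False by (simp add: lo_def hi_def)
        have pos: "lo > 0"
        proof -
          have "\<bar>s - s0\<bar> < s0" "\<bar>t - s0\<bar> < s0" using rs rt rd by (auto simp: d_def)
          then have "s > 0" "t > 0" by (simp_all add: abs_less_iff)
          then show ?thesis by (simp add: lo_def)
        qed
        have dps: "(ps has_real_derivative (deriv (deriv \<phi>) w - a - c * (w - s0))) (at w)" if "lo \<le> w" for w
        proof -
          have "w > 0" using that pos by simp
          then show ?thesis unfolding ps_def
            by (auto intro!: derivative_eq_intros dphi_deriv simp: algebra_simps power2_eq_square divide_simps)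
        qed
        obtain xi where xi: "lo < xi" "xi < hi" "ps hi - ps lo = (hi - lo) * (deriv (deriv \<phi>) xi - a - c * (xi - s0))"
          using MVT2[OF lohi, of ps "\<lambda>w. deriv (deriv \<phi>) w - a - c * (w - s0)"] dps by force
        have xib: "\<bar>xi - s0\<bar> \<le> r" using xi rs rt unfolding lo_def hi_def by (auto simp: abs_le_iff)
        have "hq s t - a - c / 2 * ((s - s0) + (t - s0)) = (ps s - ps t) / (s - t)"
          using False unfolding hq_def ps_def
          by (simp add: field_simps power2_eq_square)
        also have "(ps s - ps t) / (s - t) = (ps hi - ps lo) / (hi - lo)"
        proof (cases "s < t")
          case True
          have "(ps s - ps t) / (s - t) = (ps t - ps s) / (t - s)"
            by (metis minus_diff_eq minus_divide_divide)
          then show ?thesis using True by (simp add: lo_def hi_def min_def max_def)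
        next
          case False
          then show ?thesis using \<open>s \<noteq> t\<close> by (simp add: lo_def hi_def min_def max_def)
        qed
        also have "... = deriv (deriv \<phi>) xi - a - c * (xi - s0)" using xi lohi by simp
        finally show ?thesis using bound[OF xib] by simp
      qed
      show ?thesis using goal
        by (simp add: yst r_def a_def hq_def real_norm_def)
    qed
    ultimately show "\<exists>d>0. \<forall>y. norm (y - (s0, s0)) < d \<longrightarrow>
        norm (hq (fst y) (snd y) - hq (fst (s0, s0)) (snd (s0, s0)) - c / 2 * (fst (y - (s0, s0)) + snd (y - (s0, s0))))
        \<le> e * norm (y - (s0, s0))" by blast
  qed
qed

lemma hq_offdiag:
  assumes s0: "s0 > 0" and t0: "t0 > 0" and ne: "s0 \<noteq> t0"
  shows "(\<lambda>p. hq (fst p) (snd p)) differentiable (at (s0, t0))"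
proof -
  have "(\<lambda>p::real\<times>real. (deriv \<phi> (fst p) - deriv \<phi> (snd p)) / (fst p - snd p)) differentiable (at (s0, t0))"
  proof (intro differentiable_divide differentiable_diff)
    show "(\<lambda>p::real\<times>real. deriv \<phi> (fst p)) differentiable (at (s0, t0))"
      using differentiable_compose[of "deriv \<phi>" fst "(s0, t0)" UNIV] dphi_differentiable[OF s0]
      by (simp add: bounded_linear_imp_differentiable bounded_linear_fst)
    show "(\<lambda>p::real\<times>real. deriv \<phi> (snd p)) differentiable (at (s0, t0))"
      using differentiable_compose[of "deriv \<phi>" snd "(s0, t0)" UNIV] dphi_differentiable[OF t0]
      by (simp add: bounded_linear_imp_differentiable bounded_linear_snd)
  qed (use ne in \<open>auto intro: bounded_linear_imp_differentiable bounded_linear_fst bounded_linear_snd\<close>)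
  then obtain D where D: "((\<lambda>p::real\<times>real. (deriv \<phi> (fst p) - deriv \<phi> (snd p)) / (fst p - snd p)) has_derivative D) (at (s0, t0))"
    unfolding differentiable_def by blast
  have op: "open {p::real\<times>real. fst p \<noteq> snd p}"
    by (intro open_Collect_neq continuous_intros)
  have "((\<lambda>p. hq (fst p) (snd p)) has_derivative D) (at (s0, t0))"
    by (rule has_derivative_transform_within_open[OF D op]) (use ne in \<open>auto simp: hq_def\<close>)
  then show ?thesis unfolding differentiable_def by blast
qed

lemma hq_differentiable:
  assumes "s0 > 0" "t0 > 0"
  shows "(\<lambda>p. hq (fst p) (snd p)) differentiable (at (s0, t0))"
proof (cases "s0 = t0")
  case True
  then show ?thesis using hq_diag[OF assms(1)] unfolding differentiable_def by blast
qed (use hq_offdiag assms in blast)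

lemma hq_pos: "s > 0 \<Longrightarrow> t > 0 \<Longrightarrow> hq s t \<noteq> 0"
  using theta_pos[of s t] theta_hq[of s t] by auto

end


lemma diff_prod:
  fixes f :: "'i \<Rightarrow> 'a::real_normed_vector \<Rightarrow> real"
  assumes "\<And>i. i \<in> I \<Longrightarrow> f i differentiable (at x)"
  shows "(\<lambda>x. \<Prod>i\<in>I. f i x) differentiable (at x)"
proof -
  obtain f' where "\<And>i. i \<in> I \<Longrightarrow> (f i has_derivative f' i) (at x)"
    using assms unfolding differentiable_def by metis
  then show ?thesis unfolding differentiable_def by (blast intro: has_derivative_prod)
qed

lemma det_differentiable:
  fixes M :: "'a::real_normed_vector \<Rightarrow> real^'n^'n"
  assumes "\<And>i j. (\<lambda>z. M z $ i $ j) differentiable (at z0)"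
  shows "(\<lambda>z. det (M z)) differentiable (at z0)"
  unfolding det_def
  by (intro differentiable_sum finite_permutations ballI differentiable_mult differentiable_const diff_prod assms)
     simp

lemma dd_eq:
  fixes g :: "real^'n \<Rightarrow> real"
  assumes "(g has_derivative g') (at y)"
  shows "deriv (\<lambda>t. g (y + t *\<^sub>R w)) 0 = g' w"
proof -
  have l: "((\<lambda>t::real. y + t *\<^sub>R w) has_derivative (\<lambda>h. h *\<^sub>R w)) (at 0)"
    by (auto intro!: derivative_eq_intros)
  have a: "(g has_derivative g') (at ((\<lambda>t::real. y + t *\<^sub>R w) 0))" using assms by simp
  have "((\<lambda>t. g (y + t *\<^sub>R w)) has_derivative (\<lambda>h. g' (h *\<^sub>R w))) (at 0)"
    using has_derivative_compose[OF l a] by simp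
  moreover have "(\<lambda>h. g' (h *\<^sub>R w)) = (*) (g' w)"
    using has_derivative_bounded_linear[OF assms] by (simp add: linear_simps fun_eq_iff mult.commute)
  ultimately have "((\<lambda>t. g (y + t *\<^sub>R w)) has_real_derivative g' w) (at 0)"
    unfolding has_field_derivative_def by simp
  then show ?thesis by (rule DERIV_imp_deriv)
qed

lemma pd_eq: "(g has_derivative g') (at y) \<Longrightarrow> pd g i y = g' (axis i 1)"
  unfolding pd_def by (rule dd_eq)

lemma open_U: "open {z::real^'n. \<forall>i. z$i > 0}"
proof -
  have "{z::real^'n. \<forall>i. z$i > 0} = (\<Inter>i\<in>UNIV. {z. z$i > 0})" by auto
  then show ?thesis by (simp add: open_INT open_halfspace_component_gt_cart)
qed

context setting begin

lemma theta_comp_diff: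
  assumes z0: "\<forall>m. z0$m > 0"
  shows "(\<lambda>z. theta \<phi> (z$i / xs$i) (z$j / xs$j)) differentiable (at z0)"
proof -
  let ?g = "\<lambda>z::real^'n. (z$i / xs$i, z$j / xs$j)"
  have gl: "bounded_linear ?g"
    by (intro bounded_linear_Pair bounded_linear_compose[OF bounded_linear_divide bounded_linear_vec_nth])
  then have gd: "?g differentiable (at z0)" by (rule bounded_linear_imp_differentiable)
  have pos: "z0$i / xs$i > 0" "z0$j / xs$j > 0" using z0 xs_pos by auto
  have hd: "(\<lambda>p. hq (fst p) (snd p)) differentiable (at (?g z0))"
    using hq_differentiable[OF pos] by simp
  have "(\<lambda>z. hq (fst (?g z)) (snd (?g z))) differentiable (at z0)"
    by (rule differentiable_compose[OF hd gd])
  then have "(\<lambda>z. hq (z$i / xs$i) (z$j / xs$j)) differentiable (at z0)" by simp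
  then have "(\<lambda>z. 1 / hq (z$i / xs$i) (z$j / xs$j)) differentiable (at z0)"
    using hq_pos[OF pos] by (intro differentiable_divide differentiable_const) auto
  then show ?thesis unfolding theta_hq .
qed

lemma K_entry_diff:
  assumes z0: "\<forall>m. z0$m > 0"
  shows "(\<lambda>z. Kmat Q xs \<phi> z $ i $ j) differentiable (at z0)"
proof (cases "i = j")
  case True
  have eq: "(\<lambda>z. Kmat Q xs \<phi> z $ i $ j) = (\<lambda>z. \<Sum>k\<in>UNIV - {i}. Q$i$k * xs$i * theta \<phi> (z$i / xs$i) (z$k / xs$k))"
    using True by (simp add: Kmat_def fun_eq_iff)
  show ?thesis unfolding eq
    by (intro differentiable_sum ballI differentiable_mult differentiable_const theta_comp_diff[OF z0]) auto
next
  case False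
  have eq: "(\<lambda>z. Kmat Q xs \<phi> z $ i $ j) = (\<lambda>z. - (Q$i$j * xs$i * theta \<phi> (z$i / xs$i) (z$j / xs$j)))"
    using False by (simp add: Kmat_def fun_eq_iff)
  show ?thesis unfolding eq
    by (intro differentiable_minus differentiable_mult differentiable_const theta_comp_diff[OF z0])
qed

definition Dsum :: "real^'n \<Rightarrow> real" where
  "Dsum z = (\<Sum>j\<in>UNIV. det (Kmat Q xs \<phi> z + Ejj j))"

lemma Dsum_diff: "\<forall>m. z0$m > 0 \<Longrightarrow> Dsum differentiable (at z0)"
  unfolding Dsum_def
  by (intro differentiable_sum ballI det_differentiable)
     (auto intro!: differentiable_add K_entry_diff differentiable_const)

lemma G_eq: "\<forall>m. z$m > 0 \<Longrightarrow> detg (Kmat Q xs \<phi> z) = real CARD('n) / Dsum z"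
  unfolding detg_def Dsum_def using kerpsd.pos_eig_prod_eq[OF K_kerpsd] by simp

lemma Dsum_pos: "\<forall>m. z$m > 0 \<Longrightarrow> Dsum z > 0"
  unfolding Dsum_def using kerpsd.pos_eig_prod_eq[OF K_kerpsd] kerpsd.pos_eig_prod_pos[OF K_kerpsd] by simp

lemma G_pos: "\<forall>m. z$m > 0 \<Longrightarrow> detg (Kmat Q xs \<phi> z) > 0"
  using G_eq Dsum_pos by simp

lemma sqrtG_diff:
  assumes z0: "\<forall>m. z0$m > 0"
  shows "(\<lambda>z. sqrt (detg (Kmat Q xs \<phi> z))) differentiable (at z0)"
proof -
  have d1: "(\<lambda>z. real CARD('n) / Dsum z) differentiable (at z0)"
    using Dsum_diff[OF z0] Dsum_pos[OF z0] by (intro differentiable_divide differentiable_const) auto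
  have d2: "sqrt differentiable (at (real CARD('n) / Dsum z0))"
    using Dsum_pos[OF z0] DERIV_real_sqrt[of "real CARD('n) / Dsum z0"]
    unfolding real_differentiable_def by auto
  have "(\<lambda>z. sqrt (real CARD('n) / Dsum z)) differentiable (at z0)"
    using differentiable_compose[of sqrt "\<lambda>z. real CARD('n) / Dsum z" z0 UNIV] d1 d2 by simp
  then obtain D where D: "((\<lambda>z. sqrt (real CARD('n) / Dsum z)) has_derivative D) (at z0)"
    unfolding differentiable_def by blast
  have "((\<lambda>z. sqrt (detg (Kmat Q xs \<phi> z))) has_derivative D) (at z0)"
    by (rule has_derivative_transform_within_open[OF D open_U]) (use z0 G_eq in auto)
  then show ?thesis unfolding differentiable_def by blast
qed

end


lemma sum_shift_row0:
  fixes A :: "real^'n^'n"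
  assumes "(\<Sum>j\<in>UNIV. A$i$j) = 0"
  shows "(\<Sum>j\<in>UNIV - {dl}. A$i$j * (w$j - w$dl)) = (A *v w)$i"
proof -
  have "(\<Sum>j\<in>UNIV. A$i$j * (w$j - w$dl)) = (\<Sum>j\<in>UNIV. A$i$j * w$j) - w$dl * (\<Sum>j\<in>UNIV. A$i$j)"
    by (simp add: algebra_simps sum_subtractf sum_distrib_left)
  then show ?thesis using assms by (simp add: sum_minus_dl matrix_vector_mult_def)
qed

lemma lift_add:
  assumes "j \<noteq> dl"
  shows "lift dl (y + s *\<^sub>R axis j 1) = lift dl y + s *\<^sub>R (axis j 1 - axis dl (1::real))"
proof -
  have "(\<Sum>k\<in>UNIV - {dl}. (y + s *\<^sub>R axis j 1)$k) = (\<Sum>k\<in>UNIV - {dl}. y$k) + s"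
  proof -
    have "(\<Sum>k\<in>UNIV - {dl}. (y + s *\<^sub>R axis j 1)$k) = (\<Sum>k\<in>UNIV - {dl}. y$k) + (\<Sum>k\<in>UNIV - {dl}. s * (axis j 1 :: real^_)$k)"
      by (simp add: sum.distrib)
    also have "(\<Sum>k\<in>UNIV - {dl}. s * (axis j 1 :: real^_)$k) = (\<Sum>k\<in>UNIV - {dl}. if k = j then s else 0)"
      by (rule sum.cong) (auto simp: axis_def)
    also have "... = s" using assms by (simp add: sum.delta')
    finally show ?thesis .
  qed
  then show ?thesis using assms by (simp add: lift_def vec_eq_iff axis_def)
qed

lemma lift_id:
  assumes "(\<Sum>i\<in>UNIV. x$i) = (1::real)"
  shows "lift dl x = x"
proof -
  have "x$dl = 1 - (\<Sum>j\<in>UNIV - {dl}. x$j)" using assms by (simp add: sum_minus_dl)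
  then show ?thesis by (simp add: lift_def vec_eq_iff)
qed


theorem lemma2p3:
  fixes Q :: "real^'n^'n" and xs :: "real^'n" and \<phi> :: "real \<Rightarrow> real"
    and f :: "real^'n \<Rightarrow> real" and dl :: 'n and x :: "real^'n"
  defines "K \<equiv> Kmat Q xs \<phi>"
    and "G \<equiv> (\<lambda>z. detg (Kmat Q xs \<phi> z))"
    and "F \<equiv> (\<lambda>y. f (lift dl y))"
  assumes d2: "CARD('n) \<ge> 2"
    and Q_offdiag: "\<forall>i j. i \<noteq> j \<longrightarrow> Q$i$j \<ge> 0"
    and Q_rows: "\<forall>i. (\<Sum>j\<in>UNIV. Q$i$j) = 0"
    and Q_conn: "\<forall>i j. (i, j) \<in> ({(a, b). a \<noteq> b \<and> Q$a$b > 0} \<union> {(a, b). a \<noteq> b \<and> Q$b$a > 0})\<^sup>*"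
    and xs_pos: "\<forall>i. xs$i > 0"
    and xs_stat: "transpose Q *v xs = 0"
    and xs_sum: "(\<Sum>i\<in>UNIV. xs$i) = 1"
    and db: "\<forall>i j. Q$i$j * xs$i = Q$j$i * xs$j"
    and \<phi>_smooth: "smooth_pos \<phi>"
    and \<phi>_conv: "\<forall>t>0. deriv (deriv \<phi>) t > 0"
    and f_C2: "C2_on {z. \<forall>i. z$i > 0} f"
    and x_simplex: "\<forall>i. 0 < x$i \<and> x$i < 1" "(\<Sum>i\<in>UNIV. x$i) = 1"
  shows "(1 / sqrt (G x) *
           (\<Sum>i\<in>UNIV - {dl}. \<Sum>j\<in>UNIV - {dl}.
              pd (\<lambda>y. sqrt (G (lift dl y)) * gup dl (K (lift dl y)) $ i $ j * pd F j y) i x)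
         = 1 / sqrt (G x) * (\<Sum>k\<in>UNIV. pd (\<lambda>z. sqrt (G z) * (K z *v egrad f z) $ k) k x))
       \<and> ((\<Sum>i\<in>UNIV - {dl}. \<Sum>j\<in>UNIV - {dl}. gup dl (K x) $ i $ j * pd F i x * pd F j x)
         = egrad f x \<bullet> (K x *v egrad f x))"
proof -
  interpret S: setting Q xs \<phi>
    using Q_offdiag Q_conn xs_pos db \<phi>_smooth \<phi>_conv by (simp add: setting_def)
  define U where "U = {z::real^'n. \<forall>i. 0 < z$i}"
  have oU: "open U" unfolding U_def by (rule open_U)
  have xU: "x \<in> U" using x_simplex unfolding U_def by auto
  have lx: "lift dl x = x" using x_simplex(2) by (rule lift_id)
  have Kz: "\<And>z. K z = Kmat Q xs \<phi> z" by (simp add: K_def)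
  have fd: "\<And>z. z \<in> U \<Longrightarrow> f differentiable (at z)"
    using f_C2 oU unfolding C2_on_def U_def by (simp add: differentiable_on_eq_differentiable_at)
  have pdd: "\<And>i z. z \<in> U \<Longrightarrow> pd f i differentiable (at z)"
    using f_C2 oU unfolding C2_on_def U_def by (simp add: differentiable_on_eq_differentiable_at)
  have kerK: "\<And>z. z \<in> U \<Longrightarrow> kerone (K z)"
    unfolding U_def Kz using S.K_kerpsd kerpsd.axioms(1) by blast
  have colsum: "\<And>z w. (\<Sum>k\<in>UNIV. (K z *v w)$k) = 0"
  proof -
    fix z w
    have "(\<Sum>k\<in>UNIV. (K z *v w)$k) = (\<Sum>k\<in>UNIV. \<Sum>j\<in>UNIV. K z $ j $ k * w$j)"
      unfolding Kz by (simp add: matrix_vector_mult_def S.K_sym)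
    also have "... = (\<Sum>j\<in>UNIV. w$j * (\<Sum>k\<in>UNIV. K z $ j $ k))"
      by (subst sum.swap) (simp add: sum_distrib_left mult.commute)
    also have "... = 0" unfolding Kz by (simp add: S.K_row0)
    finally show "(\<Sum>k\<in>UNIV. (K z *v w)$k) = 0" .
  qed
  have pdF: "pd F j y = pd f j (lift dl y) - pd f dl (lift dl y)" if j: "j \<noteq> dl" and y: "lift dl y \<in> U" for j y
  proof -
    obtain f' where f': "(f has_derivative f') (at (lift dl y))" using fd[OF y] unfolding differentiable_def by blast
    have "pd F j y = deriv (\<lambda>s. f (lift dl y + s *\<^sub>R (axis j 1 - axis dl 1))) 0"
      unfolding pd_def F_def lift_add[OF j] ..
    also have "... = f' (axis j 1 - axis dl 1)" by (rule dd_eq[OF f'])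
    also have "... = f' (axis j 1) - f' (axis dl 1)"
      using has_derivative_bounded_linear[OF f'] by (simp add: linear_simps)
    also have "... = pd f j (lift dl y) - pd f dl (lift dl y)"
      using pd_eq[OF f'] by simp
    finally show ?thesis .
  qed
  define sG where "sG z = sqrt (G z)" for z
  have sGd: "sG differentiable (at x)"
    using S.sqrtG_diff xU unfolding sG_def G_def U_def by blast
  define T where "T i j z = sG z * K z $ i $ j * (pd f j z - pd f dl z)" for i j z
  have Td: "T i j differentiable (at x)" for i j
    unfolding T_def Kz using sGd pdd[OF xU] S.K_entry_diff xU unfolding U_def
    by (intro differentiable_mult differentiable_diff) auto
  have "\<forall>i j. \<exists>D. (T i j has_derivative D) (at x)" using Td unfolding differentiable_def by blast
  then obtain T' where T': "\<And>i j. (T i j has_derivative T' i j) (at x)" by metis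
  define V where "V i z = sG z * (K z *v egrad f z) $ i" for i z
  have Veq: "V i = (\<lambda>z. \<Sum>j\<in>UNIV - {dl}. T i j z)" for i
  proof
    fix z
    have "(\<Sum>j\<in>UNIV - {dl}. K z $ i $ j * (egrad f z $ j - egrad f z $ dl)) = (K z *v egrad f z)$i"
      by (rule sum_shift_row0) (simp add: Kz S.K_row0)
    moreover have "(\<Sum>j\<in>UNIV - {dl}. T i j z) = sG z * (\<Sum>j\<in>UNIV - {dl}. K z $ i $ j * (egrad f z $ j - egrad f z $ dl))"
      unfolding T_def by (simp add: sum_distrib_left mult.assoc egrad_def)
    ultimately show "V i z = (\<Sum>j\<in>UNIV - {dl}. T i j z)"
      unfolding V_def by simp
  qed
  define V' where "V' i h = (\<Sum>j\<in>UNIV - {dl}. T' i j h)" for i h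
  have V': "(V i has_derivative V' i) (at x)" for i
    unfolding Veq V'_def by (intro has_derivative_sum T')
  have linV: "linear (V' i)" for i using V' has_derivative_linear by blast
  have V'sum: "(\<Sum>k\<in>UNIV. V' k h) = 0" for h
  proof -
    have "((\<lambda>z. \<Sum>k\<in>UNIV. V k z) has_derivative (\<lambda>h. \<Sum>k\<in>UNIV. V' k h)) (at x)"
      by (intro has_derivative_sum V')
    moreover have "(\<lambda>z. \<Sum>k\<in>UNIV. V k z) = (\<lambda>z. 0)"
      unfolding V_def by (simp add: sum_distrib_left[symmetric] colsum)
    ultimately have "((\<lambda>z. 0::real) has_derivative (\<lambda>h. \<Sum>k\<in>UNIV. V' k h)) (at x)" by simp
    then have "(\<lambda>h. \<Sum>k\<in>UNIV. V' k h) = (\<lambda>h. 0)"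
      using has_derivative_unique has_derivative_const by blast
    then show ?thesis by metis
  qed
  have RHS: "pd (\<lambda>z. sqrt (G z) * (K z *v egrad f z) $ k) k x = V' k (axis k 1)" for k
  proof -
    have "(\<lambda>z. sqrt (G z) * (K z *v egrad f z) $ k) = V k" by (simp add: V_def sG_def fun_eq_iff)
    then show ?thesis using pd_eq[OF V'[of k]] by simp
  qed
  have LHS: "pd (\<lambda>y. sqrt (G (lift dl y)) * gup dl (K (lift dl y)) $ i $ j * pd F j y) i x
      = T' i j (axis i 1 - axis dl 1)" if i: "i \<noteq> dl" and j: "j \<noteq> dl" for i j
  proof -
    let ?b = "axis i 1 - axis dl (1::real)"
    let ?L = "\<lambda>y. sqrt (G (lift dl y)) * gup dl (K (lift dl y)) $ i $ j * pd F j y"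
    define W where "W = {t::real. x + t *\<^sub>R ?b \<in> U}"
    have oW: "open W" unfolding W_def
      by (rule open_vimage[OF oU, unfolded vimage_def]) (intro continuous_intros)
    have W0: "0 \<in> W" using xU by (simp add: W_def)
    have eq: "?L (x + t *\<^sub>R axis i 1) = T i j (x + t *\<^sub>R ?b)" if t: "t \<in> W" for t
    proof -
      let ?z = "x + t *\<^sub>R ?b"
      have zU: "?z \<in> U" using t by (simp add: W_def)
      have lz: "lift dl (x + t *\<^sub>R axis i 1) = ?z" using lift_add[OF i, of x t] lx by simp
      have "gup dl (K ?z) $ i $ j = K ?z $ i $ j" using kerone.gup_eq[OF kerK[OF zU] i j] .
      moreover have "pd F j (x + t *\<^sub>R axis i 1) = pd f j ?z - pd f dl ?z"
        using pdF[OF j] lz zU by simp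
      ultimately show ?thesis unfolding lz T_def sG_def by simp
    qed
    have ev: "eventually (\<lambda>t. ?L (x + t *\<^sub>R axis i 1) = T i j (x + t *\<^sub>R ?b)) (nhds 0)"
      unfolding eventually_nhds using oW W0 eq by blast
    have "pd ?L i x = deriv (\<lambda>t. T i j (x + t *\<^sub>R ?b)) 0"
      unfolding pd_def[of ?L i x] by (rule deriv_cong_ev[OF ev refl])
    also have "... = T' i j ?b" by (rule dd_eq[OF T'])
    finally show ?thesis .
  qed
  have sumL: "(\<Sum>i\<in>UNIV - {dl}. \<Sum>j\<in>UNIV - {dl}.
      pd (\<lambda>y. sqrt (G (lift dl y)) * gup dl (K (lift dl y)) $ i $ j * pd F j y) i x)
     = (\<Sum>k\<in>UNIV. pd (\<lambda>z. sqrt (G z) * (K z *v egrad f z) $ k) k x)"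
  proof -
    have "(\<Sum>i\<in>UNIV - {dl}. \<Sum>j\<in>UNIV - {dl}.
      pd (\<lambda>y. sqrt (G (lift dl y)) * gup dl (K (lift dl y)) $ i $ j * pd F j y) i x)
      = (\<Sum>i\<in>UNIV - {dl}. V' i (axis i 1 - axis dl 1))"
      by (intro sum.cong refl) (simp add: LHS V'_def)
    also have "... = (\<Sum>i\<in>UNIV - {dl}. V' i (axis i 1)) - (\<Sum>i\<in>UNIV - {dl}. V' i (axis dl 1))"
      using linV by (simp add: linear_diff sum_subtractf)
    also have "(\<Sum>i\<in>UNIV - {dl}. V' i (axis dl 1)) = - V' dl (axis dl 1)"
      using V'sum[of "axis dl 1"] by (simp add: sum_minus_dl)
    also have "(\<Sum>i\<in>UNIV - {dl}. V' i (axis i 1)) - - V' dl (axis dl 1) = (\<Sum>k\<in>UNIV. V' k (axis k 1))"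
      by (simp add: sum_minus_dl)
    finally show ?thesis by (simp add: RHS)
  qed
  have part2: "(\<Sum>i\<in>UNIV - {dl}. \<Sum>j\<in>UNIV - {dl}. gup dl (K x) $ i $ j * pd F i x * pd F j x)
         = egrad f x \<bullet> (K x *v egrad f x)"
  proof -
    let ?g = "egrad f x"
    have pF: "pd F i x = ?g$i - ?g$dl" if "i \<noteq> dl" for i
      using pdF[OF that, of x] lx xU by (simp add: egrad_def)
    have "(\<Sum>i\<in>UNIV - {dl}. \<Sum>j\<in>UNIV - {dl}. gup dl (K x) $ i $ j * pd F i x * pd F j x)
        = (\<Sum>i\<in>UNIV - {dl}. (?g$i - ?g$dl) * (\<Sum>j\<in>UNIV - {dl}. K x $ i $ j * (?g$j - ?g$dl)))"
      using kerone.gup_eq[OF kerK[OF xU]] pF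
      by (intro sum.cong refl) (simp add: sum_distrib_left mult_ac)
    also have "... = (\<Sum>i\<in>UNIV - {dl}. (?g$i - ?g$dl) * (K x *v ?g)$i)"
      by (intro sum.cong refl) (simp add: sum_shift_row0 Kz S.K_row0)
    also have "... = (\<Sum>i\<in>UNIV. (?g$i - ?g$dl) * (K x *v ?g)$i)"
      by (simp add: sum_minus_dl)
    also have "... = (\<Sum>i\<in>UNIV. ?g$i * (K x *v ?g)$i) - ?g$dl * (\<Sum>i\<in>UNIV. (K x *v ?g)$i)"
      by (simp add: left_diff_distrib sum_subtractf sum_distrib_left)
    also have "... = ?g \<bullet> (K x *v ?g)"
      by (simp add: colsum inner_vec_def)
    finally show ?thesis .
  qed
  show ?thesis using sumL part2 by simp
qed


end
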